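(* Let $k\ge 3$ be an integer, $X$ a finite connected poset and $F$ a field admitting a primitive $(k-1)$-th root of unity with $\mathrm{char}(F)\nmid k$. Then every bijective $F$-linear map $\varphi:I(X,F)\to I(X,F)$ with $\varphi(P_k(I(X,F)))\subseteq P_k(I(X,F))$ is of the form $\varphi=r\psi$, where $r\in F$ satisfies $r^{k-1}=1$ and $\psi$ is either an automorphism or an anti-automorphism of $I(X,F)$.
   Context: $I(X,F)$ is the incidence algebra of the locally finite poset $X$ over $F$ (functions $f:X\times X\to F$ vanishing unless $x\le y$, with product $(fg)(x,y)=\sum_{x\le z\le y}f(x,z)g(z,y)$). A poset is connected if any two elements are joined by a finite sequence of elements in which consecutive elements are comparable. $P_k(A)=\{a: a^k=a\}$ is the set of $k$-potents. *)

theory Defs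
  imports Main
begin

definition poset_on :: "'a set \<Rightarrow> ('a \<Rightarrow> 'a \<Rightarrow> bool) \<Rightarrow> bool" where
  "poset_on X le \<longleftrightarrow>
     (\<forall>x\<in>X. le x x) \<and>
     (\<forall>x\<in>X. \<forall>y\<in>X. le x y \<and> le y x \<longrightarrow> x = y) \<and>
     (\<forall>x\<in>X. \<forall>y\<in>X. \<forall>z\<in>X. le x y \<and> le y z \<longrightarrow> le x z)"

definition comparable_step :: "'a set \<Rightarrow> ('a \<Rightarrow> 'a \<Rightarrow> bool) \<Rightarrow> 'a \<Rightarrow> 'a \<Rightarrow> bool" where
  "comparable_step X le u v \<longleftrightarrow> u \<in> X \<and> v \<in> X \<and> (le u v \<or> le v u)"

definition connected_poset :: "'a set \<Rightarrow> ('a \<Rightarrow> 'a \<Rightarrow> bool) \<Rightarrow> bool" where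
  "connected_poset X le \<longleftrightarrow> (\<forall>x\<in>X. \<forall>y\<in>X. (comparable_step X le)\<^sup>*\<^sup>* x y)"

definition incidence_alg :: "'a set \<Rightarrow> ('a \<Rightarrow> 'a \<Rightarrow> bool) \<Rightarrow> ('a \<Rightarrow> 'a \<Rightarrow> 'f::field) set" where
  "incidence_alg X le = {f. \<forall>x y. f x y \<noteq> 0 \<longrightarrow> x \<in> X \<and> y \<in> X \<and> le x y}"

definition inc_mult :: "'a set \<Rightarrow> ('a \<Rightarrow> 'a \<Rightarrow> bool) \<Rightarrow> ('a \<Rightarrow> 'a \<Rightarrow> 'f::field)
    \<Rightarrow> ('a \<Rightarrow> 'a \<Rightarrow> 'f) \<Rightarrow> ('a \<Rightarrow> 'a \<Rightarrow> 'f)" where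
  "inc_mult X le f g = (\<lambda>x y. if x \<in> X \<and> y \<in> X \<and> le x y
      then (\<Sum>z\<in>{z\<in>X. le x z \<and> le z y}. f x z * g z y) else 0)"

definition inc_one :: "'a set \<Rightarrow> ('a \<Rightarrow> 'a \<Rightarrow> 'f::field)" where
  "inc_one X = (\<lambda>x y. if x \<in> X \<and> x = y then 1 else 0)"

fun inc_pow :: "'a set \<Rightarrow> ('a \<Rightarrow> 'a \<Rightarrow> bool) \<Rightarrow> ('a \<Rightarrow> 'a \<Rightarrow> 'f::field) \<Rightarrow> nat
    \<Rightarrow> ('a \<Rightarrow> 'a \<Rightarrow> 'f)" where
  "inc_pow X le f 0 = inc_one X"
| "inc_pow X le f (Suc n) = inc_mult X le f (inc_pow X le f n)"

definition k_potents :: "nat \<Rightarrow> 'a set \<Rightarrow> ('a \<Rightarrow> 'a \<Rightarrow> bool) \<Rightarrow> ('a \<Rightarrow> 'a \<Rightarrow> 'f::field) set" where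
  "k_potents k X le = {a \<in> incidence_alg X le. inc_pow X le a k = a}"

definition inc_smult :: "'f::field \<Rightarrow> ('a \<Rightarrow> 'a \<Rightarrow> 'f) \<Rightarrow> ('a \<Rightarrow> 'a \<Rightarrow> 'f)" where
  "inc_smult c f = (\<lambda>x y. c * f x y)"

definition inc_add :: "('a \<Rightarrow> 'a \<Rightarrow> 'f::field) \<Rightarrow> ('a \<Rightarrow> 'a \<Rightarrow> 'f) \<Rightarrow> ('a \<Rightarrow> 'a \<Rightarrow> 'f)" where
  "inc_add f g = (\<lambda>x y. f x y + g x y)"

definition inc_linear :: "'a set \<Rightarrow> ('a \<Rightarrow> 'a \<Rightarrow> bool)
    \<Rightarrow> (('a \<Rightarrow> 'a \<Rightarrow> 'f::field) \<Rightarrow> ('a \<Rightarrow> 'a \<Rightarrow> 'f)) \<Rightarrow> bool" where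
  "inc_linear X le \<phi> \<longleftrightarrow>
     (\<forall>f\<in>incidence_alg X le. \<forall>g\<in>incidence_alg X le. \<phi> (inc_add f g) = inc_add (\<phi> f) (\<phi> g)) \<and>
     (\<forall>c. \<forall>f\<in>incidence_alg X le. \<phi> (inc_smult c f) = inc_smult c (\<phi> f))"

definition inc_automorphism :: "'a set \<Rightarrow> ('a \<Rightarrow> 'a \<Rightarrow> bool)
    \<Rightarrow> (('a \<Rightarrow> 'a \<Rightarrow> 'f::field) \<Rightarrow> ('a \<Rightarrow> 'a \<Rightarrow> 'f)) \<Rightarrow> bool" where
  "inc_automorphism X le \<psi> \<longleftrightarrow>
     bij_betw \<psi> (incidence_alg X le) (incidence_alg X le) \<and> inc_linear X le \<psi> \<and>
     \<psi> (inc_one X) = inc_one X \<and>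
     (\<forall>f\<in>incidence_alg X le. \<forall>g\<in>incidence_alg X le.
        \<psi> (inc_mult X le f g) = inc_mult X le (\<psi> f) (\<psi> g))"

definition inc_anti_automorphism :: "'a set \<Rightarrow> ('a \<Rightarrow> 'a \<Rightarrow> bool)
    \<Rightarrow> (('a \<Rightarrow> 'a \<Rightarrow> 'f::field) \<Rightarrow> ('a \<Rightarrow> 'a \<Rightarrow> 'f)) \<Rightarrow> bool" where
  "inc_anti_automorphism X le \<psi> \<longleftrightarrow>
     bij_betw \<psi> (incidence_alg X le) (incidence_alg X le) \<and> inc_linear X le \<psi> \<and>
     \<psi> (inc_one X) = inc_one X \<and>
     (\<forall>f\<in>incidence_alg X le. \<forall>g\<in>incidence_alg X le.
        \<psi> (inc_mult X le f g) = inc_mult X le (\<psi> g) (\<psi> f))"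

definition primitive_root_of_unity :: "nat \<Rightarrow> 'f::field \<Rightarrow> bool" where
  "primitive_root_of_unity n w \<longleftrightarrow> w ^ n = 1 \<and> (\<forall>j. 0 < j \<and> j < n \<longrightarrow> w ^ j \<noteq> 1)"

end

theory Submission
  imports Defs "HOL-Library.Function_Algebras" "HOL-Computational_Algebra.Polynomial"
begin


lemma sum_fun_apply: "(sum F S) x = sum (\<lambda>i. F i x) S"
  by (induct S rule: infinite_finite_induct) auto

definition EE :: "'a \<Rightarrow> 'a \<Rightarrow> 'a \<Rightarrow> 'a \<Rightarrow> 'f::field" where
  "EE i j = (\<lambda>x y. if x = i \<and> y = j then 1 else 0)"

lemma EE_apply: "EE i j x y = (if x = i \<and> y = j then 1 else 0)"
  by (simp add: EE_def)

lemma smult_apply: "inc_smult c f x y = c * f x y"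
  by (simp add: inc_smult_def)

lemma inc_add_eq: "inc_add f g = f + g"
  by (simp add: inc_add_def fun_eq_iff)

locale IA =
  fixes X :: "'a set" and le :: "'a \<Rightarrow> 'a \<Rightarrow> bool"
  assumes finX: "finite X" and po: "poset_on X le"
begin

abbreviation mul (infixl "\<star>" 70) where "f \<star> g \<equiv> inc_mult X le f g"

lemma rfl: "x \<in> X \<Longrightarrow> le x x" using po unfolding poset_on_def by blast
lemma asym: "x \<in> X \<Longrightarrow> y \<in> X \<Longrightarrow> le x y \<Longrightarrow> le y x \<Longrightarrow> x = y"
  using po unfolding poset_on_def by blast
lemma trns: "x \<in> X \<Longrightarrow> y \<in> X \<Longrightarrow> z \<in> X \<Longrightarrow> le x y \<Longrightarrow> le y z \<Longrightarrow> le x z"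
  using po unfolding poset_on_def by blast

lemma mult_apply: "(f \<star> g) x y = (if x \<in> X \<and> y \<in> X \<and> le x y
      then (\<Sum>z\<in>{z\<in>X. le x z \<and> le z y}. f x z * g z y) else 0)"
  by (simp add: inc_mult_def)

lemma inA_iff: "f \<in> incidence_alg X le \<longleftrightarrow> (\<forall>x y. f x y \<noteq> 0 \<longrightarrow> x \<in> X \<and> y \<in> X \<and> le x y)"
  by (simp add: incidence_alg_def)

lemma inA_zero: "f \<in> incidence_alg X le \<Longrightarrow> \<not> (x \<in> X \<and> y \<in> X \<and> le x y) \<Longrightarrow> f x y = 0"
  by (auto simp: incidence_alg_def)

lemma mult_in[simp]: "f \<star> g \<in> incidence_alg X le"
  by (auto simp: incidence_alg_def mult_apply split: if_splits)

lemma assoc: "(f \<star> g) \<star> h = f \<star> (g \<star> h)"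
proof (intro ext)
  fix x y
  show "((f \<star> g) \<star> h) x y = (f \<star> (g \<star> h)) x y"
  proof (cases "x \<in> X \<and> y \<in> X \<and> le x y")
    case False thus ?thesis unfolding mult_apply[of _ _ x y] by auto
  next
    case True
    define I where "I = {z\<in>X. le x z \<and> le z y}"
    have fI: "finite I" using finX by (simp add: I_def)
    have "((f \<star> g) \<star> h) x y = (\<Sum>z\<in>I. (f \<star> g) x z * h z y)"
      using True by (simp add: mult_apply[of _ _ x y] I_def)
    also have "\<dots> = (\<Sum>z\<in>I. (\<Sum>w\<in>{w\<in>X. le x w \<and> le w z}. f x w * g w z) * h z y)"
      using True by (intro sum.cong) (auto simp: mult_apply I_def)
    also have "\<dots> = (\<Sum>z\<in>I. \<Sum>w\<in>{w. w \<in> I \<and> le w z}. f x w * g w z * h z y)"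
    proof (rule sum.cong[OF refl])
      fix z assume z: "z \<in> I"
      have "{w\<in>X. le x w \<and> le w z} = {w. w \<in> I \<and> le w z}"
        using z True by (auto simp: I_def intro: trns)
      thus "(\<Sum>w\<in>{w\<in>X. le x w \<and> le w z}. f x w * g w z) * h z y =
          (\<Sum>w\<in>{w. w \<in> I \<and> le w z}. f x w * g w z * h z y)"
        by (simp add: sum_distrib_right)
    qed
    also have "\<dots> = (\<Sum>w\<in>I. \<Sum>z\<in>{z. z \<in> I \<and> le w z}. f x w * g w z * h z y)"
      using sum.swap_restrict[OF fI fI, of "\<lambda>z w. f x w * g w z * h z y" "\<lambda>z w. le w z"]
      by simp
    also have "\<dots> = (\<Sum>w\<in>I. f x w * (\<Sum>z\<in>{z\<in>X. le w z \<and> le z y}. g w z * h z y))"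
    proof (rule sum.cong[OF refl])
      fix w assume w: "w \<in> I"
      have "{z\<in>X. le w z \<and> le z y} = {z. z \<in> I \<and> le w z}"
        using w True by (auto simp: I_def intro: trns)
      thus "(\<Sum>z\<in>{z. z \<in> I \<and> le w z}. f x w * g w z * h z y) =
          f x w * (\<Sum>z\<in>{z\<in>X. le w z \<and> le z y}. g w z * h z y)"
        by (simp add: sum_distrib_left mult.assoc)
    qed
    also have "\<dots> = (\<Sum>w\<in>I. f x w * (g \<star> h) w y)"
      using True by (intro sum.cong) (auto simp: mult_apply I_def)
    also have "\<dots> = (f \<star> (g \<star> h)) x y"
      using True by (simp add: mult_apply[of _ _ x y] I_def)
    finally show ?thesis .
  qed
qed

end


declare smult_apply[simp]

context IA
begin

abbreviation AA where "AA \<equiv> incidence_alg X le"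

lemma inA2: "f \<in> incidence_alg X le \<longleftrightarrow> (\<forall>x y. \<not> (x \<in> X \<and> y \<in> X \<and> le x y) \<longrightarrow> f x y = 0)"
  by (auto simp: incidence_alg_def)

lemma zero_in[simp]: "0 \<in> incidence_alg X le"
  by (simp add: incidence_alg_def)

lemma add_in[simp]: "f \<in> incidence_alg X le \<Longrightarrow> g \<in> incidence_alg X le \<Longrightarrow> f + g \<in> incidence_alg X le"
  by (simp add: inA2)

lemma diff_in[simp]: "f \<in> incidence_alg X le \<Longrightarrow> g \<in> incidence_alg X le \<Longrightarrow> f - g \<in> incidence_alg X le"
  by (simp add: inA2)

lemma uminus_in[simp]: "f \<in> incidence_alg X le \<Longrightarrow> - f \<in> incidence_alg X le"
  by (auto simp: incidence_alg_def)

lemma sm_in[simp]: "f \<in> incidence_alg X le \<Longrightarrow> inc_smult c f \<in> incidence_alg X le"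
  by (auto simp: incidence_alg_def)

lemma sum_in: "(\<And>i. i \<in> S \<Longrightarrow> F i \<in> incidence_alg X le) \<Longrightarrow> sum F S \<in> incidence_alg X le"
  by (induct S rule: infinite_finite_induct) auto

lemma one_in[simp]: "inc_one X \<in> incidence_alg X le"
  by (auto simp: incidence_alg_def inc_one_def rfl)

lemma EE_in[simp]: "i \<in> X \<Longrightarrow> j \<in> X \<Longrightarrow> le i j \<Longrightarrow> EE i j \<in> incidence_alg X le"
  by (auto simp: incidence_alg_def EE_def)

lemma distL: "f \<star> (g + h) = f \<star> g + f \<star> h"
  by (auto simp: fun_eq_iff mult_apply sum.distrib distrib_left)

lemma distR: "(g + h) \<star> f = g \<star> f + h \<star> f"
  by (auto simp: fun_eq_iff mult_apply sum.distrib distrib_right)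

lemma diffL: "f \<star> (g - h) = f \<star> g - f \<star> h"
  by (auto simp: fun_eq_iff mult_apply sum_subtractf right_diff_distrib)

lemma diffR: "(g - h) \<star> f = g \<star> f - h \<star> f"
  by (auto simp: fun_eq_iff mult_apply sum_subtractf left_diff_distrib)

lemma smL: "inc_smult c f \<star> g = inc_smult c (f \<star> g)"
  by (auto simp: fun_eq_iff mult_apply sum_distrib_left mult.assoc)

lemma smR: "f \<star> inc_smult c g = inc_smult c (f \<star> g)"
  by (auto simp: fun_eq_iff mult_apply sum_distrib_left mult.assoc mult.left_commute)

lemma zeroL[simp]: "0 \<star> f = 0"
  by (auto simp: fun_eq_iff mult_apply)

lemma zeroR[simp]: "f \<star> 0 = 0"
  by (auto simp: fun_eq_iff mult_apply)

lemma sumL: "sum F S \<star> g = (\<Sum>i\<in>S. F i \<star> g)"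
proof (induct S rule: infinite_finite_induct)
  case (insert x S)
  then show ?case by (simp only: sum.insert[OF insert(1,2)] distR insert(3))
qed (auto simp: fun_eq_iff mult_apply)

lemma sumR: "g \<star> sum F S = (\<Sum>i\<in>S. g \<star> F i)"
proof (induct S rule: infinite_finite_induct)
  case (insert x S)
  then show ?case by (simp only: sum.insert[OF insert(1,2)] distL insert(3))
qed (auto simp: fun_eq_iff mult_apply)

lemma sm_sm: "inc_smult c (inc_smult d f) = inc_smult (c * d) f"
  by (simp add: fun_eq_iff mult.assoc)

lemma sm_add: "inc_smult c (f + g) = inc_smult c f + inc_smult c g"
  by (simp add: fun_eq_iff distrib_left)

lemma sm_diff: "inc_smult c (f - g) = inc_smult c f - inc_smult c g"
  by (simp add: fun_eq_iff right_diff_distrib)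

lemma add_sm: "inc_smult (c + d) f = inc_smult c f + inc_smult d f"
  by (simp add: fun_eq_iff distrib_right)

lemma sm_one[simp]: "inc_smult 1 f = f"
  by (simp add: fun_eq_iff)

lemma sm_zero[simp]: "inc_smult 0 f = 0" "inc_smult c 0 = 0"
  by (simp_all add: fun_eq_iff)

lemma sm_sum: "inc_smult c (sum F S) = (\<Sum>i\<in>S. inc_smult c (F i))"
proof (induct S rule: infinite_finite_induct)
  case (insert x S)
  then show ?case by (simp only: sum.insert[OF insert(1,2)] sm_add insert(3))
qed auto

lemma EE_left: assumes "i \<in> X" "j \<in> X" "le i j" "f \<in> incidence_alg X le"
  shows "(EE i j \<star> f) x y = (if x = i then f j y else 0)"
proof (cases "x = i")
  case True
  show ?thesis
  proof (cases "y \<in> X \<and> le i y")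
    case yes: True
    have "(EE i j \<star> f) x y = (\<Sum>z\<in>{z\<in>X. le i z \<and> le z y}. if z = j then f j y else 0)"
      using True yes assms by (auto simp: mult_apply EE_def intro!: sum.cong)
    also have "\<dots> = (if j \<in> {z\<in>X. le i z \<and> le z y} then f j y else 0)"
      by (simp add: sum.delta[OF finite_subset[OF _ finX]])
    also have "\<dots> = f j y" using assms inA_zero[OF assms(4), of j y] by auto
    finally show ?thesis using True by simp
  next
    case False
    have "f j y = 0"
    proof (rule ccontr)
      assume "f j y \<noteq> 0"
      then have "y \<in> X" "le j y" using assms(4) by (auto simp: incidence_alg_def)
      then show False using False assms trns by blast
    qed
    then show ?thesis using True False by (auto simp: mult_apply)
  qed
next
  case False
  then show ?thesis by (auto simp: mult_apply EE_def)
qed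

lemma EE_right: assumes "i \<in> X" "j \<in> X" "le i j" "f \<in> incidence_alg X le"
  shows "(f \<star> EE i j) x y = (if y = j then f x i else 0)"
proof (cases "y = j")
  case True
  show ?thesis
  proof (cases "x \<in> X \<and> le x j")
    case yes: True
    have "(f \<star> EE i j) x y = (\<Sum>z\<in>{z\<in>X. le x z \<and> le z j}. if z = i then f x i else 0)"
      using True yes assms by (auto simp: mult_apply EE_def intro!: sum.cong)
    also have "\<dots> = (if i \<in> {z\<in>X. le x z \<and> le z j} then f x i else 0)"
      by (simp add: sum.delta[OF finite_subset[OF _ finX]])
    also have "\<dots> = f x i" using assms inA_zero[OF assms(4), of x i] by auto
    finally show ?thesis using True by simp
  next
    case False
    have "f x i = 0"
    proof (rule ccontr)
      assume "f x i \<noteq> 0"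
      then have "x \<in> X" "le x i" using assms(4) by (auto simp: incidence_alg_def)
      then show False using False assms trns by blast
    qed
    then show ?thesis using True False by (auto simp: mult_apply)
  qed
next
  case False
  then show ?thesis by (auto simp: mult_apply EE_def)
qed

lemma EE_EE: assumes "i \<in> X" "j \<in> X" "le i j" "k \<in> X" "l \<in> X" "le k l"
  shows "EE i j \<star> EE k l = (if j = k then EE i l else 0)"
  using assms by (auto simp: fun_eq_iff EE_left EE_apply)

lemma one_eq: "inc_one X = (\<Sum>i\<in>X. EE i i)"
proof (intro ext)
  fix x y
  have "(\<Sum>i\<in>X. EE i i) x y = (\<Sum>i\<in>X. if x = i then (if y = x then 1 else 0) else 0)"
    unfolding sum_fun_apply EE_apply by (intro sum.cong) auto
  also have "\<dots> = inc_one X x y" by (auto simp add: sum.delta'[OF finX] inc_one_def)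
  finally show "inc_one X x y = (\<Sum>i\<in>X. EE i i) x y" by (rule sym)
qed

lemma oneL: "f \<in> incidence_alg X le \<Longrightarrow> inc_one X \<star> f = f"
  by (simp add: one_eq sumL fun_eq_iff sum_fun_apply EE_left rfl sum.delta[OF finX] sum.delta'[OF finX])
     (auto simp: inA_zero)

lemma oneR: "f \<in> incidence_alg X le \<Longrightarrow> f \<star> inc_one X = f"
  by (simp add: one_eq sumR fun_eq_iff sum_fun_apply EE_right rfl sum.delta[OF finX] sum.delta'[OF finX])
     (auto simp: inA_zero)

definition PP :: "('a \<times> 'a) set" where "PP = {p. fst p \<in> X \<and> snd p \<in> X \<and> le (fst p) (snd p)}"

lemma finPP: "finite PP"
  by (rule finite_subset[of _ "X \<times> X"]) (auto simp: PP_def finX)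

lemma expand: assumes "f \<in> incidence_alg X le"
  shows "f = (\<Sum>p\<in>PP. inc_smult (f (fst p) (snd p)) (EE (fst p) (snd p)))"
proof (intro ext)
  fix x y
  have "(\<Sum>p\<in>PP. inc_smult (f (fst p) (snd p)) (EE (fst p) (snd p))) x y
      = (\<Sum>p\<in>PP. if p = (x,y) then f x y else 0)"
    by (simp add: sum_fun_apply EE_apply) (intro sum.cong, auto)
  also have "\<dots> = f x y"
    using inA_zero[OF assms, of x y] by (simp add: sum.delta[OF finPP]) (auto simp: PP_def)
  finally show "f x y = (\<Sum>p\<in>PP. inc_smult (f (fst p) (snd p)) (EE (fst p) (snd p))) x y" by simp
qed

lemma diag: "i \<in> X \<Longrightarrow> (f \<star> g) i i = f i i * g i i"
proof -
  assume i: "i \<in> X"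
  have "{z\<in>X. le i z \<and> le z i} = {i}" using i asym rfl by auto
  then show ?thesis using i rfl by (simp add: mult_apply)
qed

lemma EE_nz: "EE i j \<noteq> (0 :: 'a \<Rightarrow> 'a \<Rightarrow> 'f::field)"
  by (auto simp: fun_eq_iff EE_def dest: spec[of _ i])

end

declare smult_apply[simp del]


lemma prim_ne0: assumes "primitive_root_of_unity m (w::'f::field)" "m \<ge> 1" shows "w \<noteq> 0"
  using assms by (auto simp: primitive_root_of_unity_def power_0_left)

lemma prim_inj: assumes "primitive_root_of_unity m (w::'f::field)" "i < m" "j < m" "w ^ i = w ^ j"
  shows "i = j"
proof (rule ccontr)
  assume ne: "i \<noteq> j"
  have w0: "w \<noteq> 0" using assms(1,2) prim_ne0[OF assms(1)] by auto
  { fix i j :: nat assume ij: "i < j" "j < m" "w ^ i = w ^ j"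
    have "w ^ j = w ^ i * w ^ (j - i)" using ij by (metis le_add_diff_inverse less_imp_le power_add)
    then have "w ^ i * w ^ (j - i) = w ^ i * 1" using ij by simp
    then have "w ^ (j - i) = 1" using w0 by simp
    moreover have "0 < j - i" "j - i < m" using ij by auto
    ultimately have False using assms(1) by (auto simp: primitive_root_of_unity_def) }
  then show False using ne assms by (metis linorder_neqE_nat)
qed

lemma two_ne0: assumes "primitive_root_of_unity m (w::'f::field)" "m \<ge> 2" "of_nat (Suc m) \<noteq> (0::'f)"
  shows "(2::'f) \<noteq> 0"
proof
  assume two: "(2::'f) = 0"
  have "odd (Suc m)"
  proof
    assume "even (Suc m)"
    then obtain q where "Suc m = 2 * q" by (rule evenE)
    then have "of_nat (Suc m) = (2::'f) * of_nat q" by simp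
    then show False using assms(3) two by simp
  qed
  then have "even m" by simp
  then obtain q where q: "m = 2 * q" by (auto elim: evenE)
  have "0 < q" "q < m" using q assms(2) by auto
  then have wq: "w ^ q \<noteq> 1" using assms(1) by (auto simp: primitive_root_of_unity_def)
  have "(w ^ q) ^ 2 = w ^ (q * 2)" by (rule power_mult[symmetric])
  also have "q * 2 = m" using q by simp
  also have "w ^ m = 1" using assms(1) by (simp add: primitive_root_of_unity_def)
  finally have sq: "(w ^ q) ^ 2 = 1" .
  have "(w ^ q - 1) ^ 2 = (w ^ q) ^ 2 + 1 - 2 * w ^ q" by (simp add: power2_diff)
  also have "\<dots> = 2 - 2 * w ^ q" using sq by simp
  also have "\<dots> = 0" using two by simp
  finally show False using wq by simp
qed

lemma vander_kill:
  fixes c :: "nat \<Rightarrow> 'f::field"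
  assumes "primitive_root_of_unity m w" "m \<ge> 1"
    and h: "\<And>j. j < m \<Longrightarrow> (\<Sum>d\<in>{1..m}. (w ^ j) ^ d * c d) = 0"
  shows "c 1 = 0"
proof -
  define p where "p = (\<Sum>d\<in>{1..m}. monom (c d) d)"
  have poly_p: "poly p t = (\<Sum>d\<in>{1..m}. t ^ d * c d)" for t
    by (simp add: p_def poly_sum poly_monom mult.commute)
  have degp: "degree p \<le> m"
    unfolding p_def by (rule degree_sum_le) (auto intro: order.trans[OF degree_monom_le])
  define R where "R = insert 0 ((\<lambda>j. w ^ j) ` {..<m})"
  have w0: "w \<noteq> 0" using prim_ne0 assms by auto
  have "inj_on (\<lambda>j. w ^ j) {..<m}" using prim_inj[OF assms(1)] by (auto simp: inj_on_def)
  then have "card ((\<lambda>j. w ^ j) ` {..<m}) = m" by (simp add: card_image)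
  moreover have "0 \<notin> (\<lambda>j. w ^ j) ` {..<m}" using w0 by auto
  ultimately have cR: "card R = Suc m" by (simp add: R_def)
  have "p = 0"
  proof (rule poly_eqI_degree[where A = R])
    fix x assume "x \<in> R"
    then consider "x = 0" | j where "j < m" "x = w ^ j" by (auto simp: R_def)
    then show "poly p x = poly 0 x"
    proof cases
      case 1
      have "poly p x = (\<Sum>d\<in>{1..m}. 0)" unfolding poly_p 1 by (intro sum.cong) auto
      then show ?thesis by simp
    next
      case 2
      then show ?thesis using h[of j] by (simp add: poly_p)
    qed
  qed (use cR degp in auto)
  then have "coeff p 1 = 0" by simp
  moreover have "coeff p 1 = c 1"
    using assms(2) by (simp add: p_def coeff_sum coeff_monom)
  ultimately show ?thesis by simp
qed


context IA
begin

abbreviation pw where "pw f n \<equiv> inc_pow X le f n"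

lemma pw_in[simp]: "pw f n \<in> incidence_alg X le"
  by (cases n) auto

lemma pw_Suc_right: "f \<in> incidence_alg X le \<Longrightarrow> pw f (Suc n) = pw f n \<star> f"
proof (induct n)
  case 0 then show ?case by (simp add: oneL oneR)
next
  case (Suc n)
  have "pw f (Suc (Suc n)) = f \<star> (pw f n \<star> f)" using Suc by simp
  also have "\<dots> = pw f (Suc n) \<star> f" by (simp add: assoc)
  finally show ?case .
qed

lemma pw_idem: "f \<in> incidence_alg X le \<Longrightarrow> f \<star> f = f \<Longrightarrow> pw f (Suc n) = f"
  by (induct n) (auto simp: oneR)

lemma lin_add: "inc_linear X le T \<Longrightarrow> f \<in> incidence_alg X le \<Longrightarrow> g \<in> incidence_alg X le \<Longrightarrow> T (f + g) = T f + T g"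
  by (simp add: inc_linear_def inc_add_eq)

lemma lin_sm: "inc_linear X le T \<Longrightarrow> f \<in> incidence_alg X le \<Longrightarrow> T (inc_smult c f) = inc_smult c (T f)"
  by (simp add: inc_linear_def)

lemma zero_lam[simp]: "(\<lambda>(a::'a) (b::'a). (0::'f::field)) = 0"
  by (simp add: fun_eq_iff)

lemma lin_zero: "inc_linear X le T \<Longrightarrow> T 0 = 0"
proof -
  assume T: "inc_linear X le T"
  have "T 0 = T (inc_smult 0 0)" by (simp only: sm_zero)
  also have "\<dots> = inc_smult 0 (T 0)" using T by (simp only: lin_sm zero_in)
  also have "\<dots> = 0" by (simp only: sm_zero)
  finally show ?thesis .
qed

lemma lin_diff: "inc_linear X le T \<Longrightarrow> f \<in> incidence_alg X le \<Longrightarrow> g \<in> incidence_alg X le \<Longrightarrow> T (f - g) = T f - T g"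
proof -
  assume T: "inc_linear X le T" and f: "f \<in> incidence_alg X le" and g: "g \<in> incidence_alg X le"
  have e: "f - g = f + inc_smult (-1) g" by (simp add: fun_eq_iff smult_apply)
  have "T (f - g) = T (f + inc_smult (-1) g)" by (simp only: e)
  also have "\<dots> = T f + T (inc_smult (-1) g)" by (rule lin_add[OF T f]) (simp add: g)
  also have "\<dots> = T f + inc_smult (-1) (T g)" by (simp only: lin_sm[OF T g])
  also have "\<dots> = T f - T g" by (rule ext)+ (simp add: smult_apply)
  finally show ?thesis .
qed

lemma lin_sum: "finite S \<Longrightarrow> inc_linear X le T \<Longrightarrow> (\<And>i. i \<in> S \<Longrightarrow> F i \<in> incidence_alg X le) \<Longrightarrow>
   T (sum F S) = (\<Sum>i\<in>S. T (F i))"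
proof (induct S rule: finite_induct)
  case empty then show ?case by (simp add: lin_zero)
next
  case (insert x S)
  have "T (sum F (insert x S)) = T (F x + sum F S)" by (simp only: sum.insert[OF insert(1,2)])
  also have "\<dots> = T (F x) + T (sum F S)" using insert by (intro lin_add) (auto intro: sum_in)
  also have "\<dots> = (\<Sum>i\<in>insert x S. T (F i))" using insert by (simp only: sum.insert[OF insert(1,2)]) auto
  finally show ?case .
qed

primrec CC :: "('a \<Rightarrow> 'a \<Rightarrow> 'f::field) \<Rightarrow> ('a \<Rightarrow> 'a \<Rightarrow> 'f) \<Rightarrow> nat \<Rightarrow> nat \<Rightarrow> ('a \<Rightarrow> 'a \<Rightarrow> 'f)" where
  "CC a b 0 d = (if d = 0 then inc_one X else 0)"
| "CC a b (Suc n) d = a \<star> CC a b n d + (if d = 0 then 0 else b \<star> CC a b n (d - 1))"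

lemma CC_in: "CC a b n d \<in> incidence_alg X le"
  by (cases n) auto

lemma CC_out: "n < d \<Longrightarrow> CC a b n d = 0"
  by (induct n arbitrary: d) auto

lemma CC_0: "CC a b n 0 = pw a n"
  by (induct n) auto

lemma CC_nn: "b \<in> incidence_alg X le \<Longrightarrow> CC a b n n = pw b n"
  by (induct n) (auto simp: CC_out)

lemma pw_expand: assumes "a \<in> incidence_alg X le" "b \<in> incidence_alg X le"
  shows "pw (a + inc_smult t b) n = (\<Sum>d\<le>n. inc_smult (t ^ d) (CC a b n d))"
proof (induct n)
  case 0 then show ?case by simp
next
  case (Suc n)
  have "pw (a + inc_smult t b) (Suc n) = (a + inc_smult t b) \<star> (\<Sum>d\<le>n. inc_smult (t ^ d) (CC a b n d))"
    using Suc by (simp only: inc_pow.simps)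
  also have "\<dots> = (\<Sum>d\<le>n. inc_smult (t ^ d) (a \<star> CC a b n d)) + (\<Sum>d\<le>n. inc_smult (t ^ Suc d) (b \<star> CC a b n d))"
    by (simp add: distR sumR smR smL sm_sm sm_add sm_sum sum.distrib mult.commute)
  also have "(\<Sum>d\<le>n. inc_smult (t ^ d) (a \<star> CC a b n d)) = (\<Sum>d\<le>Suc n. inc_smult (t ^ d) (a \<star> CC a b n d))"
    by (simp add: CC_out)
  also have "(\<Sum>d\<le>n. inc_smult (t ^ Suc d) (b \<star> CC a b n d))
     = (\<Sum>d\<le>Suc n. inc_smult (t ^ d) (if d = 0 then 0 else b \<star> CC a b n (d - 1)))"
    by (simp add: sum.atMost_Suc_shift del: sum.atMost_Suc)
  also have "(\<Sum>d\<le>Suc n. inc_smult (t ^ d) (a \<star> CC a b n d)) + \<dots> = (\<Sum>d\<le>Suc n. inc_smult (t ^ d) (CC a b (Suc n) d))"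
    by (simp add: sum.distrib[symmetric] sm_add del: sum.atMost_Suc)
  finally show ?case .
qed

lemma CC_1_Suc: "CC a b (Suc n) 1 = a \<star> CC a b n 1 + b \<star> pw a n"
  by (simp add: CC_0)

lemma CC_comm: assumes "a \<in> incidence_alg X le" "b \<in> incidence_alg X le"
  shows "a \<star> CC a b n 1 - CC a b n 1 \<star> a = pw a n \<star> b - b \<star> pw a n"
proof (induct n)
  case 0 then show ?case using assms by (simp add: oneL oneR)
next
  case (Suc n)
  have "a \<star> CC a b (Suc n) 1 - CC a b (Suc n) 1 \<star> a
      = a \<star> (a \<star> CC a b n 1 - CC a b n 1 \<star> a) + a \<star> (b \<star> pw a n) - (b \<star> pw a n) \<star> a"
    by (simp add: CC_1_Suc CC_0 distL distR diffL assoc)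
  also have "\<dots> = a \<star> (pw a n \<star> b - b \<star> pw a n) + a \<star> (b \<star> pw a n) - (b \<star> pw a n) \<star> a"
    by (simp only: Suc)
  also have "\<dots> = pw a (Suc n) \<star> b - b \<star> pw a (Suc n)"
  proof -
    have c: "pw a n \<star> a = a \<star> pw a n" using pw_Suc_right[OF assms(1), of n] by simp
    show ?thesis using assms by (simp add: diffL assoc c)
  qed
  finally show ?case .
qed

lemma comm_pw: assumes "a \<in> incidence_alg X le" "b \<in> incidence_alg X le" "a \<star> b = b \<star> a"
  shows "b \<star> pw a n = pw a n \<star> b"
proof (induct n)
  case 0 then show ?case using assms by (simp add: oneL oneR)
next
  case (Suc n)
  have "b \<star> pw a (Suc n) = (b \<star> a) \<star> pw a n" by (simp add: assoc)
  also have "\<dots> = a \<star> (b \<star> pw a n)" by (simp only: assms(3)[symmetric] assoc)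
  also have "\<dots> = pw a (Suc n) \<star> b" by (simp only: Suc assoc inc_pow.simps)
  finally show ?case .
qed

lemma CC_1_comm: assumes "a \<in> incidence_alg X le" "b \<in> incidence_alg X le" "a \<star> b = b \<star> a"
  shows "CC a b (Suc n) 1 = inc_smult (of_nat (Suc n)) (pw a n \<star> b)"
proof (induct n)
  case 0 then show ?case using assms by (simp add: oneL oneR)
next
  case (Suc n)
  have "CC a b (Suc (Suc n)) 1 = a \<star> inc_smult (of_nat (Suc n)) (pw a n \<star> b) + b \<star> pw a (Suc n)"
    using Suc by (simp only: CC_1_Suc)
  also have "\<dots> = inc_smult (of_nat (Suc n)) (pw a (Suc n) \<star> b) + pw a (Suc n) \<star> b"
    using comm_pw[OF assms, of "Suc n"] by (simp add: smR assoc)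
  also have "\<dots> = inc_smult (of_nat (Suc (Suc n))) (pw a (Suc n) \<star> b)"
    by (simp add: fun_eq_iff algebra_simps smult_apply)
  finally show ?case .
qed

end


context IA
begin

lemma kpot_orth:
  fixes a b :: "'a \<Rightarrow> 'a \<Rightarrow> 'f::field"
  assumes km: "k = Suc m" "m \<ge> 1" and prim: "primitive_root_of_unity m w"
    and kne: "of_nat k \<noteq> (0::'f)"
    and a: "a \<in> incidence_alg X le" and b: "b \<in> incidence_alg X le"
    and ak: "pw a k = a" and bk: "pw b k = b"
    and abk: "\<And>j. j < m \<Longrightarrow> pw (a + inc_smult (w ^ j) b) k = a + inc_smult (w ^ j) b"
  shows "a \<star> b = 0 \<and> b \<star> a = 0"
proof -
  have C1: "CC a b k 1 = 0"
  proof (intro ext)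
    fix x y
    show "CC a b k 1 x y = 0 x y"
    proof -
      have "CC a b k 1 x y = 0"
      proof (rule vander_kill[OF prim km(2), of "\<lambda>d. CC a b k d x y"])
        fix j assume j: "j < m"
        define t where "t = w ^ j"
        have wm: "w ^ m = 1" using prim by (simp add: primitive_root_of_unity_def)
        have tk: "t ^ k = t"
        proof -
          have "t ^ k = t * (w ^ m) ^ j" using km by (simp add: t_def power_mult[symmetric] mult.commute)
          then show ?thesis using wm by simp
        qed
        have "pw (a + inc_smult t b) k x y = (\<Sum>d\<le>k. t ^ d * CC a b k d x y)"
          using pw_expand[OF a b, of t k] by (simp add: sum_fun_apply smult_apply)
        also have "\<dots> = (\<Sum>d\<in>{0..Suc m}. t ^ d * CC a b k d x y)" using km by (simp add: atMost_atLeast0)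
        also have "\<dots> = (\<Sum>d\<in>{0..m}. t ^ d * CC a b k d x y) + t ^ Suc m * CC a b k (Suc m) x y"
          by (rule sum.atLeast0_atMost_Suc)
        also have "\<dots> = t ^ 0 * CC a b k 0 x y + (\<Sum>d\<in>{1..m}. t ^ d * CC a b k d x y) + t ^ Suc m * CC a b k (Suc m) x y"
          by (simp add: sum.atLeast_Suc_atMost[of 0 m] One_nat_def)
        also have "\<dots> = a x y + (\<Sum>d\<in>{1..m}. t ^ d * CC a b k d x y) + t * b x y"
        proof -
          have c0: "CC a b k 0 = a" using ak by (simp only: CC_0)
          have "CC a b k (Suc m) = CC a b k k" by (simp only: km(1))
          also have "\<dots> = b" using bk by (simp only: CC_nn[OF b])
          finally have ck: "CC a b k (Suc m) = b" .
          have tk2: "t ^ Suc m = t" using tk by (simp only: km(1))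
          show ?thesis by (simp only: c0 ck tk2 power_0 mult_1)
        qed
        finally have e1: "pw (a + inc_smult t b) k x y = a x y + (\<Sum>d\<in>{1..m}. t ^ d * CC a b k d x y) + t * b x y" .
        have "pw (a + inc_smult t b) k x y = a x y + t * b x y"
          using abk[OF j] by (simp add: t_def smult_apply)
        with e1 show "(\<Sum>d\<in>{1..m}. (w ^ j) ^ d * CC a b k d x y) = 0" by (simp add: t_def)
      qed
      then show ?thesis by simp
    qed
  qed
  have "a \<star> CC a b k 1 - CC a b k 1 \<star> a = pw a k \<star> b - b \<star> pw a k" by (rule CC_comm[OF a b])
  then have "0 = a \<star> b - b \<star> a" using ak C1 by simp
  then have ab: "a \<star> b = b \<star> a" by simp
  have "CC a b (Suc m) 1 = inc_smult (of_nat (Suc m)) (pw a m \<star> b)" by (rule CC_1_comm[OF a b ab])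
  then have "inc_smult (of_nat k) (pw a m \<star> b) = 0" using C1 km by simp
  then have z: "pw a m \<star> b = 0" using kne by (auto simp: fun_eq_iff smult_apply)
  have "a \<star> b = pw a k \<star> b" using ak by simp
  also have "\<dots> = a \<star> (pw a m \<star> b)" using km by (simp add: assoc)
  also have "\<dots> = 0" using z by simp
  finally show ?thesis using ab by simp
qed

lemma pw_comb:
  assumes e: "e \<in> incidence_alg X le" "e \<star> e = e"
  shows "pw (e + inc_smult c (inc_one X - e)) (Suc n) = e + inc_smult (c ^ Suc n) (inc_one X - e)"
proof -
  define u where "u = inc_one X - e"
  define x where "x = e + inc_smult c u"
  have eu: "e \<star> u = 0" using e by (simp add: u_def diffL oneR)
  have ue: "u \<star> e = 0" using e by (simp add: u_def diffR oneL)
  have uu: "u \<star> u = u" using e by (simp add: u_def diffL diffR oneL oneR)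
  have xA: "x \<in> incidence_alg X le" using e by (simp add: x_def u_def)
  have "pw x (Suc n) = e + inc_smult (c ^ Suc n) u"
  proof (induct n)
    case 0
    have "pw x (Suc 0) = x" using xA by (simp add: oneR)
    also have "x = e + inc_smult (c ^ Suc 0) u" by (simp only: x_def) simp
    finally show ?case .
  next
    case (Suc n)
    have "pw x (Suc (Suc n)) = x \<star> (e + inc_smult (c ^ Suc n) u)"
      using Suc by (simp only: inc_pow.simps)
    also have "\<dots> = e + inc_smult (c ^ Suc (Suc n)) u"
      using e eu ue uu by (simp add: x_def distL distR smL smR sm_sm mult.commute)
    finally show ?case .
  qed
  then show ?thesis by (simp only: x_def u_def)
qed

end


locale Setup = IA X le for X :: "'a set" and le :: "'a \<Rightarrow> 'a \<Rightarrow> bool" +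
  fixes k m :: nat and w :: "'f::field" and \<phi> :: "('a \<Rightarrow> 'a \<Rightarrow> 'f) \<Rightarrow> ('a \<Rightarrow> 'a \<Rightarrow> 'f)"
  assumes km: "k = Suc m" "m \<ge> 2"
    and prim: "primitive_root_of_unity m w"
    and kne: "of_nat k \<noteq> (0::'f)"
    and conn: "connected_poset X le"
    and lin: "inc_linear X le \<phi>"
    and bij: "bij_betw \<phi> (incidence_alg X le) (incidence_alg X le)"
    and pres: "\<phi> ` k_potents k X le \<subseteq> k_potents k X le"
begin

lemma kpot_iff: "a \<in> k_potents k X le \<longleftrightarrow> a \<in> incidence_alg X le \<and> pw a k = a"
  by (simp add: k_potents_def)

lemma phi_in: "a \<in> incidence_alg X le \<Longrightarrow> \<phi> a \<in> incidence_alg X le"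
  using bij by (auto simp: bij_betw_def)

lemma phi_inj: "a \<in> incidence_alg X le \<Longrightarrow> b \<in> incidence_alg X le \<Longrightarrow> \<phi> a = \<phi> b \<Longrightarrow> a = b"
  using bij by (auto simp: bij_betw_def inj_on_def)

lemma phi_surj: "a \<in> incidence_alg X le \<Longrightarrow> \<exists>b\<in>incidence_alg X le. \<phi> b = a"
  using bij by (metis bij_betw_def imageE)

lemma phi_kpot: "a \<in> incidence_alg X le \<Longrightarrow> pw a k = a \<Longrightarrow> pw (\<phi> a) k = \<phi> a"
  using pres kpot_iff by blast

lemma two_ne: "(2::'f) \<noteq> 0"
  using two_ne0[OF prim km(2)] kne km(1) by simp

lemma w_ne0: "w \<noteq> 0" using prim_ne0[OF prim] km by auto

lemma w_ne1: "w \<noteq> 1"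
proof -
  have "0 < (1::nat) \<and> 1 < m" using km by simp
  then have "w ^ 1 \<noteq> 1" using prim unfolding primitive_root_of_unity_def by blast
  then show ?thesis by simp
qed

lemma wjk: "(w ^ j) ^ k = w ^ j"
proof -
  have "w ^ m = 1" using prim by (simp add: primitive_root_of_unity_def)
  then have "(w ^ j) ^ m = 1" by (metis power_mult power_mult_distrib power_one mult.commute)
  then show ?thesis using km by simp
qed

abbreviation one where "one \<equiv> inc_one X"

lemma idem_compl: "e \<in> incidence_alg X le \<Longrightarrow> e \<star> e = e \<Longrightarrow> (one - e) \<star> (one - e) = one - e"
  by (simp add: diffL diffR oneL oneR)

lemma idem_orth:
  assumes e: "e \<in> incidence_alg X le" "e \<star> e = e"
  shows "\<phi> e \<star> \<phi> (one - e) = 0 \<and> \<phi> (one - e) \<star> \<phi> e = 0"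
proof (rule kpot_orth[OF km(1) _ prim kne])
  show "1 \<le> m" using km by simp
  show "\<phi> e \<in> incidence_alg X le" "\<phi> (one - e) \<in> incidence_alg X le" using e by (auto intro: phi_in)
  have ek: "pw e k = e" unfolding km(1) by (rule pw_idem[OF e])
  have ek2: "pw (one - e) k = one - e" unfolding km(1) by (rule pw_idem[OF _ idem_compl[OF e]]) (simp add: e)
  show "pw (\<phi> e) k = \<phi> e" using e ek by (intro phi_kpot) auto
  show "pw (\<phi> (one - e)) k = \<phi> (one - e)" using e ek2 by (intro phi_kpot) auto
  fix j assume j: "j < m"
  have in1: "e + inc_smult (w ^ j) (one - e) \<in> incidence_alg X le" using e by simp
  have "pw (e + inc_smult (w ^ j) (one - e)) k = e + inc_smult ((w ^ j) ^ k) (one - e)"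
    unfolding km(1) by (rule pw_comb[OF e])
  then have "pw (e + inc_smult (w ^ j) (one - e)) k = e + inc_smult (w ^ j) (one - e)"
    by (simp only: wjk)
  then have "pw (\<phi> (e + inc_smult (w ^ j) (one - e))) k = \<phi> (e + inc_smult (w ^ j) (one - e))"
    by (rule phi_kpot[OF in1])
  moreover have "\<phi> (e + inc_smult (w ^ j) (one - e)) = \<phi> e + inc_smult (w ^ j) (\<phi> (one - e))"
    using e by (simp add: lin_add[OF lin] lin_sm[OF lin])
  ultimately show "pw (\<phi> e + inc_smult (w ^ j) (\<phi> (one - e))) k = \<phi> e + inc_smult (w ^ j) (\<phi> (one - e))"
    by simp
qed

lemma idem_u:
  assumes e: "e \<in> incidence_alg X le" "e \<star> e = e"
  shows "\<phi> e \<star> \<phi> one = \<phi> e \<star> \<phi> e" "\<phi> one \<star> \<phi> e = \<phi> e \<star> \<phi> e"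
proof -
  have d: "\<phi> (one - e) = \<phi> one - \<phi> e" using e by (simp add: lin_diff[OF lin])
  from idem_orth[OF e] d show "\<phi> e \<star> \<phi> one = \<phi> e \<star> \<phi> e" "\<phi> one \<star> \<phi> e = \<phi> e \<star> \<phi> e"
    by (simp_all add: diffL diffR)
qed

lemma EE_idem: "i \<in> X \<Longrightarrow> EE i i \<star> EE i i = EE i i"
  by (simp add: EE_EE rfl)

lemma EE_idem2: "i \<in> X \<Longrightarrow> j \<in> X \<Longrightarrow> le i j \<Longrightarrow> i \<noteq> j \<Longrightarrow>
    (EE i i + EE i j) \<star> (EE i i + EE i j) = EE i i + EE i j"
  by (simp add: distL distR EE_EE rfl)

lemma comm_EE:
  assumes "i \<in> X" "j \<in> X" "le i j"
  shows "\<phi> (EE i j) \<star> \<phi> one = \<phi> one \<star> \<phi> (EE i j)"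
proof (cases "i = j")
  case True
  have a: "EE j j \<in> incidence_alg X le" "EE j j \<star> EE j j = EE j j" using assms True EE_idem by auto
  show ?thesis using idem_u[OF a] True by simp
next
  case False
  have a1: "EE i i \<in> incidence_alg X le" "EE i i + EE i j \<in> incidence_alg X le" using assms rfl by auto
  have "EE i j = (EE i i + EE i j) - EE i i" by simp
  then have d: "\<phi> (EE i j) = \<phi> (EE i i + EE i j) - \<phi> (EE i i)"
    using lin_diff[OF lin a1(2) a1(1)] by simp
  have i1: "EE i i \<star> EE i i = EE i i" by (rule EE_idem[OF assms(1)])
  have i2: "(EE i i + EE i j) \<star> (EE i i + EE i j) = EE i i + EE i j" by (rule EE_idem2[OF assms False])
  have c1: "\<phi> (EE i i) \<star> \<phi> one = \<phi> one \<star> \<phi> (EE i i)"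
    using idem_u[OF a1(1) i1] by simp
  have c2: "\<phi> (EE i i + EE i j) \<star> \<phi> one = \<phi> one \<star> \<phi> (EE i i + EE i j)"
    using idem_u[OF a1(2) i2] by simp
  show ?thesis using c1 c2 d by (simp add: diffL diffR)
qed

lemma comm_phi:
  assumes b: "b \<in> incidence_alg X le"
  shows "\<phi> b \<star> \<phi> one = \<phi> one \<star> \<phi> b"
proof -
  have "\<phi> b = \<phi> (\<Sum>p\<in>PP. inc_smult (b (fst p) (snd p)) (EE (fst p) (snd p)))"
    using expand[OF b] by simp
  also have "\<dots> = (\<Sum>p\<in>PP. inc_smult (b (fst p) (snd p)) (\<phi> (EE (fst p) (snd p))))"
    by (subst lin_sum[OF finPP lin]) (auto simp: PP_def lin_sm[OF lin])
  finally have e: "\<phi> b = \<dots>" .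
  have "\<forall>p\<in>PP. \<phi> (EE (fst p) (snd p)) \<star> \<phi> one = \<phi> one \<star> \<phi> (EE (fst p) (snd p))"
    using comm_EE by (auto simp: PP_def)
  then show ?thesis unfolding e by (simp add: sumL sumR smL smR)
qed

lemma u_central: "a \<in> incidence_alg X le \<Longrightarrow> a \<star> \<phi> one = \<phi> one \<star> a"
proof -
  assume "a \<in> incidence_alg X le"
  then obtain b where "b \<in> incidence_alg X le" "\<phi> b = a" using phi_surj by blast
  then show ?thesis using comm_phi by blast
qed

lemma pw_sm: "pw (inc_smult r f) n = inc_smult (r ^ n) (pw f n)"
  by (induct n) (auto simp: smL smR sm_sm mult.commute)

lemma pw_one: "pw one n = one"
  by (induct n) (auto simp: oneL)

lemma phi_one: "\<exists>r. r ^ m = 1 \<and> r \<noteq> 0 \<and> \<phi> one = inc_smult r one"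
proof (cases "X = {}")
  case True
  have "\<phi> one \<in> incidence_alg X le" by (rule phi_in) simp
  then have "\<phi> one = 0" using True by (auto simp: fun_eq_iff incidence_alg_def)
  moreover have "one = 0" using True by (auto simp: fun_eq_iff inc_one_def)
  ultimately show ?thesis by (intro exI[of _ 1]) simp
next
  case False
  then obtain x0 where x0: "x0 \<in> X" by auto
  define u where "u = \<phi> one"
  have uA: "u \<in> incidence_alg X le" unfolding u_def by (rule phi_in) simp
  have off: "u i j = 0" if "i \<noteq> j" for i j
  proof (cases "i \<in> X")
    case True
    have "(EE i i \<star> u) i j = (u \<star> EE i i) i j" using u_central[of "EE i i"] True rfl by (simp add: u_def)
    then show ?thesis using True that uA rfl by (simp add: EE_left EE_right)
  next
    case False then show ?thesis using inA_zero[OF uA] by auto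
  qed
  have dg: "u i i = u j j" if "i \<in> X" "j \<in> X" "le i j" for i j
  proof -
    have "(EE i j \<star> u) i j = (u \<star> EE i j) i j" using u_central[of "EE i j"] that by (simp add: u_def)
    then show ?thesis using that uA by (simp add: EE_left EE_right)
  qed
  have cst: "u z z = u x0 x0" if "z \<in> X" for z
  proof -
    have "(comparable_step X le)\<^sup>*\<^sup>* x0 z" using conn x0 that by (auto simp: connected_poset_def)
    then show ?thesis
    proof (induct rule: rtranclp_induct)
      case base then show ?case by simp
    next
      case (step y z)
      then show ?case using dg by (auto simp: comparable_step_def)
    qed
  qed
  define r where "r = u x0 x0"
  have ur: "u = inc_smult r one"
  proof (intro ext)
    fix i j show "u i j = inc_smult r one i j"
      using off cst inA_zero[OF uA, of i j] by (auto simp: smult_apply inc_one_def r_def)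
  qed
  have "pw u k = u" unfolding u_def by (rule phi_kpot) (simp_all add: pw_one)
  then have "inc_smult (r ^ k) one = inc_smult r one" using ur by (simp add: pw_sm pw_one)
  then have "r ^ k * one x0 x0 = r * one x0 x0" by (metis smult_apply)
  then have rk: "r ^ k = r" using x0 by (simp add: inc_one_def)
  have r0: "r \<noteq> 0"
  proof
    assume "r = 0"
    then have "\<phi> one = \<phi> 0" using ur by (simp add: u_def lin_zero[OF lin])
    then have "(one::'a\<Rightarrow>'a\<Rightarrow>'f) = 0" using phi_inj[of one 0] by simp
    then have "(one::'a\<Rightarrow>'a\<Rightarrow>'f) x0 x0 = 0" by simp
    then show False using x0 by (simp add: inc_one_def)
  qed
  have "r * r ^ m = r * 1" using rk km by simp
  then have "r ^ m = 1" using r0 by simp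
  moreover have "\<phi> one = inc_smult r one" using ur by (simp only: u_def)
  ultimately show ?thesis using r0 by (intro exI[of _ r]) simp
qed

end


lemma sum_single: "finite S \<Longrightarrow> x \<in> S \<Longrightarrow> (\<And>y. y \<in> S \<Longrightarrow> y \<noteq> x \<Longrightarrow> F y = 0) \<Longrightarrow> sum F S = F x"
  by (simp add: sum.remove sum.neutral)

context IA
begin

definition ht where "ht i = card {z\<in>X. le z i \<and> z \<noteq> i}"

lemma ht_le: "ht i \<le> card X"
  unfolding ht_def by (rule card_mono[OF finX]) auto

lemma ht_less: assumes "x \<in> X" "z \<in> X" "le x z" "x \<noteq> z" shows "ht x < ht z"
proof -
  have "{w\<in>X. le w x \<and> w \<noteq> x} \<subset> {w\<in>X. le w z \<and> w \<noteq> z}"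
  proof
    show "{w\<in>X. le w x \<and> w \<noteq> x} \<subseteq> {w\<in>X. le w z \<and> w \<noteq> z}"
    proof
      fix w assume w: "w \<in> {w\<in>X. le w x \<and> w \<noteq> x}"
      then have "le w z" using assms trns by blast
      moreover have "w \<noteq> z" using w assms asym by blast
      ultimately show "w \<in> {w\<in>X. le w z \<and> w \<noteq> z}" using w by blast
    qed
    show "{w\<in>X. le w x \<and> w \<noteq> x} \<noteq> {w\<in>X. le w z \<and> w \<noteq> z}" using assms by blast
  qed
  then show ?thesis unfolding ht_def by (rule psubset_card_mono[OF finite_subset[OF _ finX], rotated]) auto
qed

lemma nil_aux:
  assumes n: "n \<in> incidence_alg X le" and d0: "\<And>i. i \<in> X \<Longrightarrow> n i i = 0"
  shows "pw n d x y \<noteq> 0 \<Longrightarrow> x \<in> X \<and> y \<in> X \<and> ht x + d \<le> ht y"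
proof (induct d arbitrary: x y)
  case 0
  then show ?case by (auto simp: inc_one_def split: if_splits)
next
  case (Suc d)
  have nz: "(n \<star> pw n d) x y \<noteq> 0" using Suc by simp
  then have xy: "x \<in> X" "y \<in> X" "le x y" by (auto simp: mult_apply split: if_splits)
  then have "(\<Sum>z\<in>{z\<in>X. le x z \<and> le z y}. n x z * pw n d z y) \<noteq> 0" using nz by (simp add: mult_apply)
  then obtain z where z: "z \<in> {z\<in>X. le x z \<and> le z y}" "n x z * pw n d z y \<noteq> 0"
    by (meson sum.neutral)
  then have nxz: "n x z \<noteq> 0" and pz: "pw n d z y \<noteq> 0" by auto
  have "x \<noteq> z" using nxz d0 xy by auto
  then have "ht x < ht z" using ht_less xy z by auto
  moreover have "ht z + d \<le> ht y" using Suc(1)[OF pz] by simp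
  ultimately show ?case using xy by simp
qed

lemma nilpotent:
  assumes n: "n \<in> incidence_alg X le" and d0: "\<And>i. i \<in> X \<Longrightarrow> n i i = 0"
  shows "pw n (Suc (card X)) = 0"
proof (intro ext)
  fix x y
  show "pw n (Suc (card X)) x y = 0 x y"
  proof (rule ccontr)
    assume "pw n (Suc (card X)) x y \<noteq> 0 x y"
    then have h: "pw n (Suc (card X)) x y \<noteq> 0" by (simp only: zero_fun_apply not_False_eq_True)
    have "ht x + Suc (card X) \<le> ht y" using nil_aux[OF n d0 h] by blast
    then show False using ht_le[of y] by linarith
  qed
qed

lemma idem_diag0:
  assumes f: "f \<in> incidence_alg X le" "f \<star> f = f" and d0: "\<And>i. i \<in> X \<Longrightarrow> f i i = 0"
  shows "f = 0"
  using nilpotent[OF f(1) d0] pw_idem[OF f] by simp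

lemma idem_diag01: "f \<star> f = f \<Longrightarrow> i \<in> X \<Longrightarrow> f i i = 0 \<or> f i i = 1"
  using diag[of i f f] by auto

lemma eMe: assumes "i \<in> X" "M \<in> incidence_alg X le"
  shows "EE i i \<star> (M \<star> EE i i) = inc_smult (M i i) (EE i i)"
  using assms rfl by (auto simp: fun_eq_iff EE_left EE_right EE_apply smult_apply)

lemma geom:
  assumes n: "n \<in> incidence_alg X le"
  shows "(inc_one X - n) \<star> (\<Sum>i<N. pw n i) = inc_one X - pw n N \<and> (\<Sum>i<N. pw n i) \<star> (inc_one X - n) = inc_one X - pw n N"
proof (induct N)
  case 0 then show ?case by simp
next
  case (Suc N)
  have s: "(\<Sum>i<Suc N. pw n i) = (\<Sum>i<N. pw n i) + pw n N" by simp
  have l: "(inc_one X - n) \<star> pw n N = pw n N - pw n (Suc N)" by (simp add: diffR oneL)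
  have c: "pw n N \<star> n = n \<star> pw n N" using pw_Suc_right[OF n, of N] by simp
  have r: "pw n N \<star> (inc_one X - n) = pw n N - pw n (Suc N)" using n by (simp add: diffL oneR c)
  have A: "(inc_one X - n) \<star> (\<Sum>i<Suc N. pw n i) = inc_one X - pw n (Suc N)"
  proof -
    have "(inc_one X - n) \<star> (\<Sum>i<Suc N. pw n i) = (inc_one X - n) \<star> (\<Sum>i<N. pw n i) + (inc_one X - n) \<star> pw n N"
      by (simp only: sum.lessThan_Suc distL)
    also have "\<dots> = (inc_one X - pw n N) + (pw n N - pw n (Suc N))"
      by (simp only: Suc[THEN conjunct1] l)
    also have "\<dots> = inc_one X - pw n (Suc N)" by (simp only: diff_add_cancel add_diff_eq)
    finally show ?thesis .
  qed
  have B: "(\<Sum>i<Suc N. pw n i) \<star> (inc_one X - n) = inc_one X - pw n (Suc N)"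
  proof -
    have "(\<Sum>i<Suc N. pw n i) \<star> (inc_one X - n) = (\<Sum>i<N. pw n i) \<star> (inc_one X - n) + pw n N \<star> (inc_one X - n)"
      by (simp only: sum.lessThan_Suc distR)
    also have "\<dots> = (inc_one X - pw n N) + (pw n N - pw n (Suc N))"
      by (simp only: Suc[THEN conjunct2] r)
    also have "\<dots> = inc_one X - pw n (Suc N)" by (simp only: diff_add_cancel add_diff_eq)
    finally show ?thesis .
  qed
  show ?case using A B by (rule conjI)
qed

end


locale Setup2 = Setup X le k m w \<phi> for X :: "'a set" and le k m and w :: "'f::field" and \<phi> +
  fixes r :: 'f
  assumes rm: "r ^ m = 1" and r0: "r \<noteq> 0" and phi1: "\<phi> (inc_one X) = inc_smult r (inc_one X)"
begin

definition psi where "psi f = inc_smult (inverse r) (\<phi> f)"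

lemma psi_in: "a \<in> incidence_alg X le \<Longrightarrow> psi a \<in> incidence_alg X le"
  by (simp add: psi_def phi_in)

lemma phi_psi: "\<phi> f = inc_smult r (psi f)"
  using r0 by (simp add: psi_def sm_sm)

lemma psi_lin: "inc_linear X le psi"
proof -
  have a: "\<phi> (inc_add f g) = inc_add (\<phi> f) (\<phi> g)" if "f \<in> incidence_alg X le" "g \<in> incidence_alg X le" for f g
    using lin that by (simp add: inc_linear_def)
  have s: "\<phi> (inc_smult c f) = inc_smult c (\<phi> f)" if "f \<in> incidence_alg X le" for c f
    using lin that by (simp add: inc_linear_def)
  show ?thesis unfolding inc_linear_def psi_def
    using a s by (simp add: inc_add_eq sm_add sm_sm mult.commute)
qed

lemma psi_add: "f \<in> incidence_alg X le \<Longrightarrow> g \<in> incidence_alg X le \<Longrightarrow> psi (f + g) = psi f + psi g"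
  by (rule lin_add[OF psi_lin])

lemma psi_inj: "a \<in> incidence_alg X le \<Longrightarrow> b \<in> incidence_alg X le \<Longrightarrow> psi a = psi b \<Longrightarrow> a = b"
proof -
  assume ab: "a \<in> incidence_alg X le" "b \<in> incidence_alg X le" "psi a = psi b"
  then have "\<phi> a = \<phi> b" by (simp add: phi_psi)
  then show "a = b" using phi_inj ab by blast
qed

lemma psi_bij: "bij_betw psi (incidence_alg X le) (incidence_alg X le)"
proof -
  have "inj_on psi (incidence_alg X le)" using psi_inj by (auto simp: inj_on_def)
  moreover have "psi ` incidence_alg X le = incidence_alg X le"
  proof
    show "psi ` incidence_alg X le \<subseteq> incidence_alg X le" using psi_in by auto
    show "incidence_alg X le \<subseteq> psi ` incidence_alg X le"
    proof
      fix a :: "'a \<Rightarrow> 'a \<Rightarrow> 'f" assume a: "a \<in> incidence_alg X le"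
      then obtain b where b: "b \<in> incidence_alg X le" "\<phi> b = inc_smult r a" using phi_surj[of "inc_smult r a"] by auto
      have "psi b = a" using b r0 by (simp add: psi_def sm_sm)
      then show "a \<in> psi ` incidence_alg X le" using b by auto
    qed
  qed
  ultimately show ?thesis by (simp add: bij_betw_def)
qed

lemma psi_one: "psi (inc_one X) = inc_one X"
  using r0 by (simp add: psi_def phi1 sm_sm)

lemma psi_idem: assumes e: "e \<in> incidence_alg X le" "e \<star> e = e"
  shows "psi e \<star> psi e = psi e"
proof -
  have "\<phi> e \<star> \<phi> e = \<phi> e \<star> \<phi> (inc_one X)" using idem_u[OF e] by simp
  also have "\<dots> = inc_smult r (\<phi> e)" using e by (simp add: phi1 smR oneR phi_in)
  finally have q: "\<phi> e \<star> \<phi> e = inc_smult r (\<phi> e)" .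
  have "psi e \<star> psi e = inc_smult (inverse r * inverse r) (\<phi> e \<star> \<phi> e)"
    by (simp add: psi_def smL smR sm_sm)
  also have "\<dots> = psi e"
  proof -
    have i: "inverse r * inverse r * r = inverse r" using r0 by (simp add: field_simps)
    have "inc_smult (inverse r * inverse r) (\<phi> e \<star> \<phi> e) = inc_smult (inverse r * inverse r * r) (\<phi> e)"
      by (simp only: q sm_sm)
    then show ?thesis by (simp only: i psi_def)
  qed
  finally show ?thesis .
qed

lemma psi_zero: "a \<in> incidence_alg X le \<Longrightarrow> psi a = 0 \<Longrightarrow> a = 0"
  using psi_inj[of a 0] lin_zero[OF psi_lin] by simp

definition ff where "ff x = psi (EE x x)"

lemma ff_in: "ff x \<in> incidence_alg X le" if "x \<in> X"
  using that by (simp add: ff_def psi_in rfl)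

lemma ff_idem: "x \<in> X \<Longrightarrow> ff x \<star> ff x = ff x"
  unfolding ff_def by (rule psi_idem) (simp_all add: rfl EE_idem)

lemma ff_nz: "x \<in> X \<Longrightarrow> ff x \<noteq> 0"
  unfolding ff_def using psi_zero[of "EE x x"] EE_nz[of x x] rfl by auto

lemma ff_sum: "(\<Sum>x\<in>X. ff x) = inc_one X"
proof -
  have "(\<Sum>x\<in>X. ff x) = psi (\<Sum>x\<in>X. EE x x)"
    unfolding ff_def by (rule lin_sum[OF finX psi_lin, symmetric]) (simp add: rfl)
  also have "\<dots> = inc_one X" by (simp add: one_eq[symmetric] psi_one)
  finally show ?thesis .
qed

lemma ff_orth: assumes xy: "x \<in> X" "y \<in> X" "x \<noteq> y" shows "ff x \<star> ff y = 0"
proof -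
  have ei: "(EE x x + EE y y) \<star> (EE x x + EE y y) = EE x x + EE y y"
    using xy by (simp add: distL distR EE_EE rfl)
  have "psi (EE x x + EE y y) \<star> psi (EE x x + EE y y) = psi (EE x x + EE y y)"
    by (rule psi_idem[OF _ ei]) (simp add: xy rfl)
  moreover have "psi (EE x x + EE y y) = ff x + ff y" unfolding ff_def by (rule psi_add) (simp_all add: xy rfl)
  ultimately have "(ff x + ff y) \<star> (ff x + ff y) = ff x + ff y" by simp
  then have s: "ff x \<star> ff y + ff y \<star> ff x = 0"
    using ff_idem[OF xy(1)] ff_idem[OF xy(2)] by (simp add: distL distR algebra_simps)
  have L: "ff x \<star> ff y + ff x \<star> ff y \<star> ff x = 0"
  proof -
    have "ff x \<star> (ff x \<star> ff y + ff y \<star> ff x) = 0" by (simp only: s zeroR)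
    then show ?thesis using ff_idem[OF xy(1)] by (simp add: distL assoc[symmetric])
  qed
  have R: "ff x \<star> ff y \<star> ff x + ff y \<star> ff x = 0"
  proof -
    have "(ff x \<star> ff y + ff y \<star> ff x) \<star> ff x = 0" by (simp only: s zeroL)
    then show ?thesis using ff_idem[OF xy(1)] by (simp add: distR assoc)
  qed
  have c: "ff x \<star> ff y = ff y \<star> ff x"
  proof -
    have "ff x \<star> ff y = - (ff x \<star> ff y \<star> ff x)" using L by (simp add: eq_neg_iff_add_eq_0)
    also have "\<dots> = ff y \<star> ff x" using R by (simp add: neg_eq_iff_add_eq_0 add.commute)
    finally show ?thesis .
  qed
  have z: "ff x \<star> ff y + ff x \<star> ff y = 0" using s c by simp
  show ?thesis
  proof (intro ext)
    fix a b
    have "(ff x \<star> ff y) a b + (ff x \<star> ff y) a b = 0"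
      using fun_cong[OF fun_cong[OF z, of a], of b] by simp
    then have "2 * (ff x \<star> ff y) a b = 0" by (metis mult_2)
    then show "(ff x \<star> ff y) a b = 0 a b" using two_ne by simp
  qed
qed

end


context Setup2
begin

lemma ff_diag01: "x \<in> X \<Longrightarrow> z \<in> X \<Longrightarrow> ff x z z = 0 \<or> ff x z z = 1"
  by (rule idem_diag01[OF ff_idem])

lemma ff_dorth: "x \<in> X \<Longrightarrow> y \<in> X \<Longrightarrow> x \<noteq> y \<Longrightarrow> z \<in> X \<Longrightarrow> ff x z z * ff y z z = 0"
  using diag[of z "ff x" "ff y"] ff_orth by simp

lemma ff_dsum: "z \<in> X \<Longrightarrow> (\<Sum>x\<in>X. ff x z z) = 1"
  using fun_cong[OF fun_cong[OF ff_sum, of z], of z] by (simp add: sum_fun_apply inc_one_def)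

lemma ff_ex: "x \<in> X \<Longrightarrow> \<exists>z\<in>X. ff x z z = 1"
proof (rule ccontr)
  assume x: "x \<in> X" and n: "\<not> (\<exists>z\<in>X. ff x z z = 1)"
  then have "\<And>i. i \<in> X \<Longrightarrow> ff x i i = 0" using ff_diag01 by blast
  then have "ff x = 0" using idem_diag0[OF ff_in[OF x] ff_idem[OF x]] by blast
  then show False using ff_nz[OF x] by simp
qed

definition sig where "sig x = (SOME z. z \<in> X \<and> ff x z z = 1)"

lemma sig_prop: "x \<in> X \<Longrightarrow> sig x \<in> X \<and> ff x (sig x) (sig x) = 1"
  unfolding sig_def by (rule someI_ex) (use ff_ex in blast)

lemma sig_in: "x \<in> X \<Longrightarrow> sig x \<in> X" using sig_prop by blast

lemma sig_inj: "inj_on sig X"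
proof (rule inj_onI)
  fix x y assume xy: "x \<in> X" "y \<in> X" "sig x = sig y"
  show "x = y"
  proof (rule ccontr)
    assume "x \<noteq> y"
    then have "ff x (sig x) (sig x) * ff y (sig x) (sig x) = 0" using ff_dorth xy sig_in by blast
    moreover have "ff x (sig x) (sig x) = 1" using sig_prop[OF xy(1)] by blast
    moreover have "ff y (sig x) (sig x) = 1" using sig_prop[OF xy(2)] xy(3) by simp
    ultimately show False by simp
  qed
qed

lemma sig_img: "sig ` X = X"
  by (rule endo_inj_surj[OF finX _ sig_inj]) (auto simp: sig_in)

lemma ff_diag: assumes "x \<in> X" "z \<in> X" shows "ff x z z = (if z = sig x then 1 else 0)"
proof (cases "z = sig x")
  case True then show ?thesis using sig_prop assms by simp
next
  case False
  obtain y where y: "y \<in> X" "z = sig y" using sig_img assms by (metis imageE)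
  then have "y \<noteq> x" using False by auto
  then have "ff x z z * ff y z z = 0" using ff_dorth assms y by blast
  then show ?thesis using sig_prop y False by simp
qed

abbreviation esig where "esig x \<equiv> EE (sig x) (sig x)"

lemma esig_in: "x \<in> X \<Longrightarrow> esig x \<in> incidence_alg X le"
  using sig_in rfl by simp

definition UU where "UU = (\<Sum>x\<in>X. esig x \<star> ff x)"
definition VV where "VV = (\<Sum>x\<in>X. ff x \<star> esig x)"

lemma UU_in: "UU \<in> incidence_alg X le" unfolding UU_def by (rule sum_in) simp
lemma VV_in: "VV \<in> incidence_alg X le" unfolding VV_def by (rule sum_in) simp

lemma ffV: assumes x: "x \<in> X" shows "ff x \<star> VV = ff x \<star> esig x"
proof -
  have "ff x \<star> VV = (\<Sum>y\<in>X. ff x \<star> (ff y \<star> esig y))" by (simp add: VV_def sumR)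
  also have "\<dots> = ff x \<star> (ff x \<star> esig x)"
    by (rule sum_single[OF finX x]) (simp add: assoc[symmetric] ff_orth x)
  also have "\<dots> = ff x \<star> esig x" by (simp add: assoc[symmetric] ff_idem x)
  finally show ?thesis .
qed

lemma Uff: assumes x: "x \<in> X" shows "UU \<star> ff x = esig x \<star> ff x"
proof -
  have "UU \<star> ff x = (\<Sum>y\<in>X. esig y \<star> ff y \<star> ff x)" by (simp add: UU_def sumL)
  also have "\<dots> = esig x \<star> ff x \<star> ff x"
    by (rule sum_single[OF finX x]) (simp add: assoc ff_orth x)
  also have "\<dots> = esig x \<star> ff x" by (simp add: assoc ff_idem x)
  finally show ?thesis .
qed

lemma eff: assumes x: "x \<in> X" shows "esig x \<star> (ff x \<star> esig x) = esig x"
  using eMe[OF sig_in[OF x] ff_in[OF x]] ff_diag[OF x sig_in[OF x]] by simp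

lemma UV: "UU \<star> VV = inc_one X"
proof -
  have "UU \<star> VV = (\<Sum>x\<in>X. esig x \<star> (ff x \<star> VV))" by (simp add: UU_def sumL assoc)
  also have "\<dots> = (\<Sum>x\<in>X. esig x)" by (intro sum.cong) (simp_all add: ffV eff)
  also have "\<dots> = (\<Sum>z\<in>sig ` X. EE z z)" by (simp add: sum.reindex[OF sig_inj])
  also have "\<dots> = inc_one X" by (simp add: sig_img one_eq)
  finally show ?thesis .
qed

lemma UU_diag: "z \<in> X \<Longrightarrow> UU z z = 1"
proof -
  assume z: "z \<in> X"
  have "UU z z = (\<Sum>x\<in>X. (esig x \<star> ff x) z z)" by (simp add: UU_def sum_fun_apply)
  also have "\<dots> = (\<Sum>x\<in>X. ff x z z)"
    by (intro sum.cong refl) (simp add: EE_left sig_in rfl ff_in ff_diag z)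
  also have "\<dots> = 1" by (rule ff_dsum[OF z])
  finally show ?thesis .
qed

definition NN where "NN = inc_one X - UU"
definition WW where "WW = (\<Sum>i<Suc (card X). pw NN i)"

lemma NN_in: "NN \<in> incidence_alg X le" by (simp add: NN_def UU_in)

lemma NN_nil: "pw NN (Suc (card X)) = 0"
  by (rule nilpotent[OF NN_in]) (simp add: NN_def UU_diag inc_one_def)

lemma UW: "UU \<star> WW = inc_one X" "WW \<star> UU = inc_one X"
proof -
  have u: "inc_one X - NN = UU" by (simp add: NN_def)
  show "UU \<star> WW = inc_one X" using geom[OF NN_in, of "Suc (card X)"] unfolding u WW_def NN_nil by simp
  show "WW \<star> UU = inc_one X" using geom[OF NN_in, of "Suc (card X)"] unfolding u WW_def NN_nil by simp
qed

lemma WW_in: "WW \<in> incidence_alg X le" unfolding WW_def by (rule sum_in) simp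

lemma VW: "VV = WW"
proof -
  have "VV = (WW \<star> UU) \<star> VV" by (simp add: UW oneL VV_in)
  also have "\<dots> = WW \<star> (UU \<star> VV)" by (simp add: assoc)
  also have "\<dots> = WW" by (simp add: UV oneR WW_in)
  finally show ?thesis .
qed

lemma VU: "VV \<star> UU = inc_one X" using UW VW by simp

lemma VU_left: "a \<in> incidence_alg X le \<Longrightarrow> VV \<star> (UU \<star> a) = a"
  by (simp add: assoc[symmetric] VU oneL)

definition th where "th a = UU \<star> (psi a \<star> VV)"

lemma th_in: "th a \<in> incidence_alg X le" by (simp add: th_def)

lemma th_EE: assumes x: "x \<in> X" shows "th (EE x x) = esig x"
proof -
  have "th (EE x x) = UU \<star> (ff x \<star> VV)" by (simp add: th_def ff_def)
  also have "\<dots> = (UU \<star> ff x) \<star> esig x" by (simp add: ffV x assoc)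
  also have "\<dots> = esig x \<star> (ff x \<star> esig x)" by (simp add: Uff x assoc)
  also have "\<dots> = esig x" by (rule eff[OF x])
  finally show ?thesis .
qed

lemma th_idem: assumes e: "e \<in> incidence_alg X le" "e \<star> e = e" shows "th e \<star> th e = th e"
proof -
  have "th e \<star> th e = UU \<star> (psi e \<star> (VV \<star> (UU \<star> (psi e \<star> VV))))" by (simp add: th_def assoc)
  also have "\<dots> = UU \<star> (psi e \<star> (psi e \<star> VV))" by (simp only: VU_left[OF mult_in])
  also have "\<dots> = UU \<star> ((psi e \<star> psi e) \<star> VV)" by (simp only: assoc)
  also have "\<dots> = th e" by (simp add: psi_idem[OF e] th_def)
  finally show ?thesis .
qed

lemma th_lin: "inc_linear X le th"
  using psi_lin unfolding inc_linear_def th_def by (simp add: inc_add_eq distL distR smL smR)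

lemma psi_th: "a \<in> incidence_alg X le \<Longrightarrow> psi a = VV \<star> (th a \<star> UU)"
proof -
  assume a: "a \<in> incidence_alg X le"
  have "VV \<star> (th a \<star> UU) = (VV \<star> UU) \<star> (psi a \<star> (VV \<star> UU))" by (simp add: th_def assoc)
  also have "\<dots> = psi a" by (simp add: VU oneL oneR psi_in[OF a])
  finally show ?thesis by simp
qed

lemma th_zero: "a \<in> incidence_alg X le \<Longrightarrow> th a = 0 \<Longrightarrow> a = 0"
  using psi_th psi_zero by simp

end


context Setup2
begin

lemma th_add: "a \<in> incidence_alg X le \<Longrightarrow> b \<in> incidence_alg X le \<Longrightarrow> th (a + b) = th a + th b"
  by (rule lin_add[OF th_lin])

lemma th_sm: "a \<in> incidence_alg X le \<Longrightarrow> th (inc_smult c a) = inc_smult c (th a)"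
  by (rule lin_sm[OF th_lin])

lemma esig_left: "x \<in> X \<Longrightarrow> G \<in> incidence_alg X le \<Longrightarrow> (esig x \<star> G) i j = (if i = sig x then G i j else 0)"
  by (simp add: EE_left sig_in rfl)

lemma esig_right: "x \<in> X \<Longrightarrow> G \<in> incidence_alg X le \<Longrightarrow> (G \<star> esig x) i j = (if j = sig x then G i j else 0)"
  by (simp add: EE_right sig_in rfl)

lemma esig_idem: "x \<in> X \<Longrightarrow> esig x \<star> esig x = esig x"
  by (simp add: EE_EE sig_in rfl)

lemma esig_orth: "x \<in> X \<Longrightarrow> z \<in> X \<Longrightarrow> x \<noteq> z \<Longrightarrow> esig x \<star> esig z = 0"
  using sig_inj by (simp add: EE_EE sig_in rfl inj_on_def) blast

lemma sq_expand:
  assumes a: "a \<in> X" and G: "G \<in> incidence_alg X le"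
  shows "(esig a + inc_smult t G) \<star> (esig a + inc_smult t G) =
         esig a + inc_smult t (esig a \<star> G + G \<star> esig a) + inc_smult (t * t) (G \<star> G)"
  using a by (simp add: distL distR smL smR sm_sm sm_add esig_idem algebra_simps)

lemma jordan1:
  assumes a: "a \<in> X" and G: "G \<in> incidence_alg X le"
    and h1: "(esig a + G) \<star> (esig a + G) = esig a + G"
    and hw: "(esig a + inc_smult w G) \<star> (esig a + inc_smult w G) = esig a + inc_smult w G"
  shows "G \<star> G = 0" "(if i = sig a then G i j else 0) + (if j = sig a then G i j else 0) = G i j"
proof -
  have E1: "esig a + (esig a \<star> G + G \<star> esig a) + (G \<star> G) = esig a + G"
    using sq_expand[OF a G, of 1] h1 by simp
  have Ew: "esig a + inc_smult w (esig a \<star> G + G \<star> esig a) + inc_smult (w * w) (G \<star> G) = esig a + inc_smult w G"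
    using sq_expand[OF a G, of w] hw by simp
  have pq: "P + Q = g" "w * P + w * w * Q = w * g"
    if "P = (esig a \<star> G + G \<star> esig a) i j" "Q = (G \<star> G) i j" "g = G i j" for P Q g i j
  proof -
    show "P + Q = g" using fun_cong[OF fun_cong[OF E1, of i], of j] that by (simp add: add.assoc)
    show "w * P + w * w * Q = w * g" using fun_cong[OF fun_cong[OF Ew, of i], of j] that by (simp add: smult_apply)
  qed
  have Q0: "(G \<star> G) i j = 0 \<and> (esig a \<star> G + G \<star> esig a) i j = G i j" for i j
  proof -
    define P Q g where "P = (esig a \<star> G + G \<star> esig a) i j" "Q = (G \<star> G) i j" "g = G i j"
    have e1: "P + Q = g" and e2: "w * P + w * w * Q = w * g" using pq P_Q_g_def by blast+
    have "w * (P + w * Q) = w * g" using e2 by (simp add: algebra_simps)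
    then have "P + w * Q = g" using w_ne0 by simp
    then have "w * Q = Q" using e1 by (metis add_left_cancel)
    then have "(w - 1) * Q = 0" by (simp add: left_diff_distrib)
    then have "Q = 0" using w_ne1 by simp
    then show ?thesis using e1 P_Q_g_def by simp
  qed
  show "G \<star> G = 0" using Q0 by (auto simp: fun_eq_iff)
  show "(if i = sig a then G i j else 0) + (if j = sig a then G i j else 0) = G i j"
    using Q0[of i j] a G by (simp add: esig_left esig_right)
qed

lemma sig_neq: "x \<in> X \<Longrightarrow> y \<in> X \<Longrightarrow> x \<noteq> y \<Longrightarrow> sig x \<noteq> sig y"
  using sig_inj by (auto simp: inj_on_def)

lemma R1:
  assumes x: "x \<in> X" and y: "y \<in> X" and xy: "le x y" "x \<noteq> y"
    and nz: "th (EE x y) i j \<noteq> 0"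
  shows "(i = sig x \<and> j = sig y) \<or> (i = sig y \<and> j = sig x)"
proof -
  define G where "G = th (EE x y)"
  have GA: "G \<in> incidence_alg X le" by (simp add: G_def th_in)
  have Exy: "(EE x y :: 'a \<Rightarrow> 'a \<Rightarrow> 'f) \<in> incidence_alg X le" using x y xy by simp
  have ex: "(EE x x :: 'a \<Rightarrow> 'a \<Rightarrow> 'f) \<in> incidence_alg X le" "(EE y y :: 'a \<Rightarrow> 'a \<Rightarrow> 'f) \<in> incidence_alg X le" using x y rfl by auto
  have ix: "(EE x x + inc_smult t (EE x y)) \<star> (EE x x + inc_smult t (EE x y)) = EE x x + inc_smult t (EE x y)" for t
    using x y xy rfl by (simp add: distL distR smL smR EE_EE)
  have iy: "(EE y y + inc_smult t (EE x y)) \<star> (EE y y + inc_smult t (EE x y)) = EE y y + inc_smult t (EE x y)" for t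
    using x y xy rfl by (simp add: distL distR smL smR EE_EE)
  have tx: "th (EE x x + inc_smult t (EE x y)) = esig x + inc_smult t G" for t
    using ex Exy by (simp add: th_add th_sm th_EE x G_def)
  have ty: "th (EE y y + inc_smult t (EE x y)) = esig y + inc_smult t G" for t
    using ex Exy by (simp add: th_add th_sm th_EE y G_def)
  have hx: "(esig x + inc_smult t G) \<star> (esig x + inc_smult t G) = esig x + inc_smult t G" for t
    using th_idem[OF _ ix[of t]] ex Exy tx[of t] by simp
  have hy: "(esig y + inc_smult t G) \<star> (esig y + inc_smult t G) = esig y + inc_smult t G" for t
    using th_idem[OF _ iy[of t]] ex Exy ty[of t] by simp
  have GG: "G \<star> G = 0" using jordan1(1)[OF x GA, of] hx[of 1] hx[of w] by simp
  have Jx: "(if i = sig x then G i j else 0) + (if j = sig x then G i j else 0) = G i j" for i j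
    using jordan1(2)[OF x GA] hx[of 1] hx[of w] by simp
  have Jy: "(if i = sig y then G i j else 0) + (if j = sig y then G i j else 0) = G i j" for i j
    using jordan1(2)[OF y GA] hy[of 1] hy[of w] by simp
  have Jz: "(if i = sig z then G i j else 0) + (if j = sig z then G i j else 0) = 0"
    if z: "z \<in> X" "z \<noteq> x" "z \<noteq> y" for z i j
  proof -
    have ez: "(EE z z :: 'a \<Rightarrow> 'a \<Rightarrow> 'f) \<in> incidence_alg X le" using z rfl by simp
    have iz: "(EE x x + EE z z + EE x y) \<star> (EE x x + EE z z + EE x y) = EE x x + EE z z + EE x y"
      using x y z xy rfl by (simp add: distL distR EE_EE)
    have "th (EE x x + EE z z + EE x y) = esig x + esig z + G"
      using ex ez Exy by (simp add: th_add th_EE x z G_def)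
    then have "(esig x + esig z + G) \<star> (esig x + esig z + G) = esig x + esig z + G"
      using th_idem[OF _ iz] ex ez Exy by simp
    then have S: "esig x \<star> G + G \<star> esig x + (esig z \<star> G + G \<star> esig z) = G"
      using z(2) by (simp add: distL distR algebra_simps GG esig_idem[OF x] esig_idem[OF z(1)] esig_orth[OF x z(1)] esig_orth[OF z(1) x])
    have "(esig x \<star> G + G \<star> esig x) i j + (esig z \<star> G + G \<star> esig z) i j = G i j"
      using fun_cong[OF fun_cong[OF S, of i], of j] by simp
    then show ?thesis using Jx[of i j] x z GA by (simp add: esig_left esig_right)
  qed
  have g: "G i j \<noteq> 0" using nz by (simp add: G_def)
  then have ij: "i \<in> X" "j \<in> X" using GA by (auto simp: incidence_alg_def)
  obtain a where a: "a \<in> X" "i = sig a" using ij sig_img by (metis imageE)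
  obtain b where b: "b \<in> X" "j = sig b" using ij sig_img by (metis imageE)
  have two: "G i j + G i j \<noteq> 0" using g two_ne by (metis mult_2 mult_eq_0_iff)
  have ab: "a = x \<or> a = y" "b = x \<or> b = y"
  proof -
    show "a = x \<or> a = y"
    proof (rule ccontr)
      assume "\<not> (a = x \<or> a = y)"
      then have "(if i = sig a then G i j else 0) + (if j = sig a then G i j else 0) = 0" by (intro Jz) (use a in auto)
      then show False using a(2) g two by (cases "i = sig a"; cases "j = sig a") auto
    qed
    show "b = x \<or> b = y"
    proof (rule ccontr)
      assume "\<not> (b = x \<or> b = y)"
      then have "(if i = sig b then G i j else 0) + (if j = sig b then G i j else 0) = 0" by (intro Jz) (use b in auto)
      then show False using b(2) g two by (cases "i = sig b"; cases "j = sig b") auto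
    qed
  qed
  have "a \<noteq> b"
  proof
    assume "a = b"
    then have "i = j" using a b by simp
    have t1: "(2::'f) \<noteq> 1" by (metis one_add_one add_cancel_left_right one_neq_zero)
    show False using \<open>i = j\<close> ab a Jx[of i j] Jy[of i j] g t1 sig_neq[OF x y xy(2)] by (auto split: if_splits)
  qed
  then show ?thesis using ab a b by auto
qed

end


context Setup2
begin

definition fw where "fw x y = le (sig x) (sig y)"
definition cf where "cf x y = (if fw x y then th (EE x y) (sig x) (sig y) else th (EE x y) (sig y) (sig x))"
definition tgt where "tgt x y = (if fw x y then EE (sig x) (sig y) else EE (sig y) (sig x))"

lemma sig_asym: "x \<in> X \<Longrightarrow> y \<in> X \<Longrightarrow> x \<noteq> y \<Longrightarrow> le (sig x) (sig y) \<Longrightarrow> \<not> le (sig y) (sig x)"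
  using asym sig_in sig_neq by blast

lemma th_mono:
  assumes x: "x \<in> X" and y: "y \<in> X" and xy: "le x y"
  shows "th (EE x y) = inc_smult (cf x y) (tgt x y) \<and> cf x y \<noteq> 0 \<and> (fw x y \<or> le (sig y) (sig x))"
proof (cases "x = y")
  case True
  have f: "fw x y" using True x by (simp add: fw_def rfl sig_in)
  have t: "th (EE x y) = esig x" using True th_EE[OF x] by simp
  then have c: "cf x y = 1" using f True by (simp add: cf_def EE_apply)
  show ?thesis using f t c True by (simp add: tgt_def)
next
  case False
  define G where "G = th (EE x y)"
  have GA: "G \<in> incidence_alg X le" by (simp add: G_def th_in)
  have Gnz: "G \<noteq> 0"
  proof
    assume "G = 0"
    then have "(EE x y :: 'a \<Rightarrow> 'a \<Rightarrow> 'f) = 0" using th_zero[of "EE x y"] x y xy by (simp add: G_def)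
    then show False using EE_nz by blast
  qed
  then obtain i j where ij: "G i j \<noteq> 0" by (auto simp: fun_eq_iff)
  have r1: "G i' j' \<noteq> 0 \<Longrightarrow> (i' = sig x \<and> j' = sig y) \<or> (i' = sig y \<and> j' = sig x)" for i' j'
    using R1[OF x y xy False] by (simp add: G_def)
  have leij: "G i' j' \<noteq> 0 \<Longrightarrow> le i' j'" for i' j' using GA by (auto simp: incidence_alg_def)
  show ?thesis
  proof (cases "le (sig x) (sig y)")
    case True
    have f: "fw x y" using True by (simp add: fw_def)
    have "G = inc_smult (G (sig x) (sig y)) (EE (sig x) (sig y))"
    proof (intro ext)
      fix i' j'
      show "G i' j' = inc_smult (G (sig x) (sig y)) (EE (sig x) (sig y)) i' j'"
      proof (cases "G i' j' = 0")
        case True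
        then show ?thesis by (auto simp: smult_apply EE_apply)
      next
        case nz: False
        then have "i' = sig x \<and> j' = sig y"
          using r1 leij sig_asym[OF x y False] True by blast
        then show ?thesis by (simp add: smult_apply EE_apply)
      qed
    qed
    moreover have "G (sig x) (sig y) \<noteq> 0"
      using r1[OF ij] leij[OF ij] sig_asym[OF x y False] True ij by blast
    ultimately show ?thesis using f by (simp add: G_def cf_def tgt_def)
  next
    case False2: False
    have f: "\<not> fw x y" using False2 by (simp add: fw_def)
    have "G = inc_smult (G (sig y) (sig x)) (EE (sig y) (sig x))"
    proof (intro ext)
      fix i' j'
      show "G i' j' = inc_smult (G (sig y) (sig x)) (EE (sig y) (sig x)) i' j'"
      proof (cases "G i' j' = 0")
        case True
        then show ?thesis by (auto simp: smult_apply EE_apply)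
      next
        case nz: False
        then have "i' = sig y \<and> j' = sig x"
          using r1 leij False2 by blast
        then show ?thesis by (simp add: smult_apply EE_apply)
      qed
    qed
    moreover have gyx: "G (sig y) (sig x) \<noteq> 0"
      using r1[OF ij] leij[OF ij] False2 ij by blast
    moreover have "le (sig y) (sig x)" using leij[OF gyx] .
    ultimately show ?thesis using f by (simp add: G_def cf_def tgt_def)
  qed
qed

lemma R3aux:
  assumes x: "x \<in> X" and y: "y \<in> X" and z: "z \<in> X"
    and lxy: "le x y" and lxz: "le x z" and d: "x \<noteq> y" "x \<noteq> z" "y \<noteq> z"
    and f1: "fw x y" and f2: "\<not> fw x z"
  shows False
proof -
  have m1: "th (EE x y) = inc_smult (cf x y) (EE (sig x) (sig y))" "cf x y \<noteq> 0" "le (sig x) (sig y)"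
    using th_mono[OF x y lxy] f1 by (auto simp: tgt_def fw_def)
  have m2: "th (EE x z) = inc_smult (cf x z) (EE (sig z) (sig x))" "cf x z \<noteq> 0" "le (sig z) (sig x)"
    using th_mono[OF x z lxz] f2 by (auto simp: tgt_def fw_def)
  have s: "sig x \<in> X" "sig y \<in> X" "sig z \<in> X" using x y z sig_in by auto
  have n: "sig x \<noteq> sig y" "sig x \<noteq> sig z" "sig y \<noteq> sig z" using sig_neq x y z d by auto
  define h where "h = (EE x x + EE x y + EE x z :: 'a \<Rightarrow> 'a \<Rightarrow> 'f)"
  have hA: "h \<in> incidence_alg X le" using x y z lxy lxz rfl by (simp add: h_def)
  have hi: "h \<star> h = h" using x y z lxy lxz d rfl by (simp add: h_def distL distR EE_EE)
  have th: "th h = esig x + inc_smult (cf x y) (EE (sig x) (sig y)) + inc_smult (cf x z) (EE (sig z) (sig x))"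
    using x y z lxy lxz rfl by (simp add: h_def th_add th_EE m1(1) m2(1))
  have "th h \<star> th h = th h" by (rule th_idem[OF hA hi])
  then have e: "(th h \<star> th h) (sig z) (sig y) = th h (sig z) (sig y)" by simp
  have "(th h \<star> th h) (sig z) (sig y) = cf x z * cf x y"
    unfolding th using s n m1(3) m2(3) rfl
    by (simp add: distL distR smL smR EE_EE smult_apply EE_apply)
  moreover have "th h (sig z) (sig y) = 0" unfolding th using n by (simp add: smult_apply EE_apply)
  ultimately show False using e m1(2) m2(2) by simp
qed

lemma R2:
  assumes x: "x \<in> X" and y: "y \<in> X" and z: "z \<in> X"
    and lxy: "le x y" and lyz: "le y z" and d: "x \<noteq> y" "x \<noteq> z" "y \<noteq> z"
  shows "fw x y = fw y z \<and> fw x z = fw x y \<and> cf x z = cf x y * cf y z"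
proof -
  have lxz: "le x z" using trns x y z lxy lyz by blast
  have s: "sig x \<in> X" "sig y \<in> X" "sig z \<in> X" using x y z sig_in by auto
  have n: "sig x \<noteq> sig y" "sig x \<noteq> sig z" "sig y \<noteq> sig z" using sig_neq x y z d by auto
  define h where "h = (EE y y + EE x y + EE y z + EE x z :: 'a \<Rightarrow> 'a \<Rightarrow> 'f)"
  have hA: "h \<in> incidence_alg X le" using x y z lxy lyz lxz rfl by (simp add: h_def)
  have hi: "h \<star> h = h" using x y z lxy lyz lxz d rfl by (simp add: h_def distL distR EE_EE)
  have e: "th h \<star> th h = th h" by (rule th_idem[OF hA hi])
  have c1: "fw x y \<Longrightarrow> fw y z \<Longrightarrow> fw x z \<Longrightarrow> ?thesis"
  proof -
    assume F1: "fw x y" and F2: "fw y z" and F3: "fw x z"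
    have m1: "th (EE x y) = inc_smult (cf x y) (EE (sig x) (sig y))" "cf x y \<noteq> 0" "le (sig x) (sig y)"
      using th_mono[OF x y lxy] F1 by (auto simp: tgt_def fw_def)
    have m2: "th (EE y z) = inc_smult (cf y z) (EE (sig y) (sig z))" "cf y z \<noteq> 0" "le (sig y) (sig z)"
      using th_mono[OF y z lyz] F2 by (auto simp: tgt_def fw_def)
    have m3: "th (EE x z) = inc_smult (cf x z) (EE (sig x) (sig z))" "cf x z \<noteq> 0" "le (sig x) (sig z)"
      using th_mono[OF x z lxz] F3 by (auto simp: tgt_def fw_def)
    have th: "th h = esig y + inc_smult (cf x y) (EE (sig x) (sig y)) + inc_smult (cf y z) (EE (sig y) (sig z)) + inc_smult (cf x z) (EE (sig x) (sig z))"
      using x y z lxy lyz lxz rfl by (simp add: h_def th_add th_EE m1(1) m2(1) m3(1))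
    have val: "(th h \<star> th h) (sig x) (sig z) = cf x y * cf y z"
      unfolding th using s n m1(3) m2(3) m3(3) rfl
      by (simp add: distL distR smL smR EE_EE smult_apply EE_apply)
    have thP: "(th h \<star> th h) (sig x) (sig z) = cf x z"
      using e unfolding th using n by (simp add: smult_apply EE_apply)
    show ?thesis using F1 F2 F3 val thP by simp
  qed
  have c2: "fw x y \<Longrightarrow> fw y z \<Longrightarrow> \<not> fw x z \<Longrightarrow> ?thesis"
  proof -
    assume F1: "fw x y" and F2: "fw y z" and F3: "\<not> fw x z"
    have m1: "th (EE x y) = inc_smult (cf x y) (EE (sig x) (sig y))" "cf x y \<noteq> 0" "le (sig x) (sig y)"
      using th_mono[OF x y lxy] F1 by (auto simp: tgt_def fw_def)
    have m2: "th (EE y z) = inc_smult (cf y z) (EE (sig y) (sig z))" "cf y z \<noteq> 0" "le (sig y) (sig z)"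
      using th_mono[OF y z lyz] F2 by (auto simp: tgt_def fw_def)
    have m3: "th (EE x z) = inc_smult (cf x z) (EE (sig z) (sig x))" "cf x z \<noteq> 0" "le (sig z) (sig x)"
      using th_mono[OF x z lxz] F3 by (auto simp: tgt_def fw_def)
    have th: "th h = esig y + inc_smult (cf x y) (EE (sig x) (sig y)) + inc_smult (cf y z) (EE (sig y) (sig z)) + inc_smult (cf x z) (EE (sig z) (sig x))"
      using x y z lxy lyz lxz rfl by (simp add: h_def th_add th_EE m1(1) m2(1) m3(1))
    have val: "(th h \<star> th h) (sig z) (sig x) = 0"
      unfolding th using s n m1(3) m2(3) m3(3) rfl
      by (simp add: distL distR smL smR EE_EE smult_apply EE_apply)
    have thP: "(th h \<star> th h) (sig z) (sig x) = cf x z"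
      using e unfolding th using n by (simp add: smult_apply EE_apply)
    show ?thesis using val thP m3(2) by simp
  qed
  have c3: "fw x y \<Longrightarrow> \<not> fw y z \<Longrightarrow> fw x z \<Longrightarrow> ?thesis"
  proof -
    assume F1: "fw x y" and F2: "\<not> fw y z" and F3: "fw x z"
    have m1: "th (EE x y) = inc_smult (cf x y) (EE (sig x) (sig y))" "cf x y \<noteq> 0" "le (sig x) (sig y)"
      using th_mono[OF x y lxy] F1 by (auto simp: tgt_def fw_def)
    have m2: "th (EE y z) = inc_smult (cf y z) (EE (sig z) (sig y))" "cf y z \<noteq> 0" "le (sig z) (sig y)"
      using th_mono[OF y z lyz] F2 by (auto simp: tgt_def fw_def)
    have m3: "th (EE x z) = inc_smult (cf x z) (EE (sig x) (sig z))" "cf x z \<noteq> 0" "le (sig x) (sig z)"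
      using th_mono[OF x z lxz] F3 by (auto simp: tgt_def fw_def)
    have th: "th h = esig y + inc_smult (cf x y) (EE (sig x) (sig y)) + inc_smult (cf y z) (EE (sig z) (sig y)) + inc_smult (cf x z) (EE (sig x) (sig z))"
      using x y z lxy lyz lxz rfl by (simp add: h_def th_add th_EE m1(1) m2(1) m3(1))
    have val: "(th h \<star> th h) (sig x) (sig z) = 0"
      unfolding th using s n m1(3) m2(3) m3(3) rfl
      by (simp add: distL distR smL smR EE_EE smult_apply EE_apply)
    have thP: "(th h \<star> th h) (sig x) (sig z) = cf x z"
      using e unfolding th using n by (simp add: smult_apply EE_apply)
    show ?thesis using val thP m3(2) by simp
  qed
  have c4: "fw x y \<Longrightarrow> \<not> fw y z \<Longrightarrow> \<not> fw x z \<Longrightarrow> ?thesis"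
  proof -
    assume F1: "fw x y" and F2: "\<not> fw y z" and F3: "\<not> fw x z"
    have m1: "th (EE x y) = inc_smult (cf x y) (EE (sig x) (sig y))" "cf x y \<noteq> 0" "le (sig x) (sig y)"
      using th_mono[OF x y lxy] F1 by (auto simp: tgt_def fw_def)
    have m2: "th (EE y z) = inc_smult (cf y z) (EE (sig z) (sig y))" "cf y z \<noteq> 0" "le (sig z) (sig y)"
      using th_mono[OF y z lyz] F2 by (auto simp: tgt_def fw_def)
    have m3: "th (EE x z) = inc_smult (cf x z) (EE (sig z) (sig x))" "cf x z \<noteq> 0" "le (sig z) (sig x)"
      using th_mono[OF x z lxz] F3 by (auto simp: tgt_def fw_def)
    have th: "th h = esig y + inc_smult (cf x y) (EE (sig x) (sig y)) + inc_smult (cf y z) (EE (sig z) (sig y)) + inc_smult (cf x z) (EE (sig z) (sig x))"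
      using x y z lxy lyz lxz rfl by (simp add: h_def th_add th_EE m1(1) m2(1) m3(1))
    have val: "(th h \<star> th h) (sig z) (sig x) = 0"
      unfolding th using s n m1(3) m2(3) m3(3) rfl
      by (simp add: distL distR smL smR EE_EE smult_apply EE_apply)
    have thP: "(th h \<star> th h) (sig z) (sig x) = cf x z"
      using e unfolding th using n by (simp add: smult_apply EE_apply)
    show ?thesis using val thP m3(2) by simp
  qed
  have c5: "\<not> fw x y \<Longrightarrow> fw y z \<Longrightarrow> fw x z \<Longrightarrow> ?thesis"
  proof -
    assume F1: "\<not> fw x y" and F2: "fw y z" and F3: "fw x z"
    have m1: "th (EE x y) = inc_smult (cf x y) (EE (sig y) (sig x))" "cf x y \<noteq> 0" "le (sig y) (sig x)"
      using th_mono[OF x y lxy] F1 by (auto simp: tgt_def fw_def)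
    have m2: "th (EE y z) = inc_smult (cf y z) (EE (sig y) (sig z))" "cf y z \<noteq> 0" "le (sig y) (sig z)"
      using th_mono[OF y z lyz] F2 by (auto simp: tgt_def fw_def)
    have m3: "th (EE x z) = inc_smult (cf x z) (EE (sig x) (sig z))" "cf x z \<noteq> 0" "le (sig x) (sig z)"
      using th_mono[OF x z lxz] F3 by (auto simp: tgt_def fw_def)
    have th: "th h = esig y + inc_smult (cf x y) (EE (sig y) (sig x)) + inc_smult (cf y z) (EE (sig y) (sig z)) + inc_smult (cf x z) (EE (sig x) (sig z))"
      using x y z lxy lyz lxz rfl by (simp add: h_def th_add th_EE m1(1) m2(1) m3(1))
    have val: "(th h \<star> th h) (sig x) (sig z) = 0"
      unfolding th using s n m1(3) m2(3) m3(3) rfl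
      by (simp add: distL distR smL smR EE_EE smult_apply EE_apply)
    have thP: "(th h \<star> th h) (sig x) (sig z) = cf x z"
      using e unfolding th using n by (simp add: smult_apply EE_apply)
    show ?thesis using val thP m3(2) by simp
  qed
  have c6: "\<not> fw x y \<Longrightarrow> fw y z \<Longrightarrow> \<not> fw x z \<Longrightarrow> ?thesis"
  proof -
    assume F1: "\<not> fw x y" and F2: "fw y z" and F3: "\<not> fw x z"
    have m1: "th (EE x y) = inc_smult (cf x y) (EE (sig y) (sig x))" "cf x y \<noteq> 0" "le (sig y) (sig x)"
      using th_mono[OF x y lxy] F1 by (auto simp: tgt_def fw_def)
    have m2: "th (EE y z) = inc_smult (cf y z) (EE (sig y) (sig z))" "cf y z \<noteq> 0" "le (sig y) (sig z)"
      using th_mono[OF y z lyz] F2 by (auto simp: tgt_def fw_def)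
    have m3: "th (EE x z) = inc_smult (cf x z) (EE (sig z) (sig x))" "cf x z \<noteq> 0" "le (sig z) (sig x)"
      using th_mono[OF x z lxz] F3 by (auto simp: tgt_def fw_def)
    have th: "th h = esig y + inc_smult (cf x y) (EE (sig y) (sig x)) + inc_smult (cf y z) (EE (sig y) (sig z)) + inc_smult (cf x z) (EE (sig z) (sig x))"
      using x y z lxy lyz lxz rfl by (simp add: h_def th_add th_EE m1(1) m2(1) m3(1))
    have val: "(th h \<star> th h) (sig z) (sig x) = 0"
      unfolding th using s n m1(3) m2(3) m3(3) rfl
      by (simp add: distL distR smL smR EE_EE smult_apply EE_apply)
    have thP: "(th h \<star> th h) (sig z) (sig x) = cf x z"
      using e unfolding th using n by (simp add: smult_apply EE_apply)
    show ?thesis using val thP m3(2) by simp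
  qed
  have c7: "\<not> fw x y \<Longrightarrow> \<not> fw y z \<Longrightarrow> fw x z \<Longrightarrow> ?thesis"
  proof -
    assume F1: "\<not> fw x y" and F2: "\<not> fw y z" and F3: "fw x z"
    have m1: "th (EE x y) = inc_smult (cf x y) (EE (sig y) (sig x))" "cf x y \<noteq> 0" "le (sig y) (sig x)"
      using th_mono[OF x y lxy] F1 by (auto simp: tgt_def fw_def)
    have m2: "th (EE y z) = inc_smult (cf y z) (EE (sig z) (sig y))" "cf y z \<noteq> 0" "le (sig z) (sig y)"
      using th_mono[OF y z lyz] F2 by (auto simp: tgt_def fw_def)
    have m3: "th (EE x z) = inc_smult (cf x z) (EE (sig x) (sig z))" "cf x z \<noteq> 0" "le (sig x) (sig z)"
      using th_mono[OF x z lxz] F3 by (auto simp: tgt_def fw_def)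
    have th: "th h = esig y + inc_smult (cf x y) (EE (sig y) (sig x)) + inc_smult (cf y z) (EE (sig z) (sig y)) + inc_smult (cf x z) (EE (sig x) (sig z))"
      using x y z lxy lyz lxz rfl by (simp add: h_def th_add th_EE m1(1) m2(1) m3(1))
    have val: "(th h \<star> th h) (sig x) (sig z) = 0"
      unfolding th using s n m1(3) m2(3) m3(3) rfl
      by (simp add: distL distR smL smR EE_EE smult_apply EE_apply)
    have thP: "(th h \<star> th h) (sig x) (sig z) = cf x z"
      using e unfolding th using n by (simp add: smult_apply EE_apply)
    show ?thesis using val thP m3(2) by simp
  qed
  have c8: "\<not> fw x y \<Longrightarrow> \<not> fw y z \<Longrightarrow> \<not> fw x z \<Longrightarrow> ?thesis"
  proof -
    assume F1: "\<not> fw x y" and F2: "\<not> fw y z" and F3: "\<not> fw x z"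
    have m1: "th (EE x y) = inc_smult (cf x y) (EE (sig y) (sig x))" "cf x y \<noteq> 0" "le (sig y) (sig x)"
      using th_mono[OF x y lxy] F1 by (auto simp: tgt_def fw_def)
    have m2: "th (EE y z) = inc_smult (cf y z) (EE (sig z) (sig y))" "cf y z \<noteq> 0" "le (sig z) (sig y)"
      using th_mono[OF y z lyz] F2 by (auto simp: tgt_def fw_def)
    have m3: "th (EE x z) = inc_smult (cf x z) (EE (sig z) (sig x))" "cf x z \<noteq> 0" "le (sig z) (sig x)"
      using th_mono[OF x z lxz] F3 by (auto simp: tgt_def fw_def)
    have th: "th h = esig y + inc_smult (cf x y) (EE (sig y) (sig x)) + inc_smult (cf y z) (EE (sig z) (sig y)) + inc_smult (cf x z) (EE (sig z) (sig x))"
      using x y z lxy lyz lxz rfl by (simp add: h_def th_add th_EE m1(1) m2(1) m3(1))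
    have val: "(th h \<star> th h) (sig z) (sig x) = cf y z * cf x y"
      unfolding th using s n m1(3) m2(3) m3(3) rfl
      by (simp add: distL distR smL smR EE_EE smult_apply EE_apply)
    have thP: "(th h \<star> th h) (sig z) (sig x) = cf x z"
      using e unfolding th using n by (simp add: smult_apply EE_apply)
    show ?thesis using F1 F2 F3 val thP by (simp add: mult.commute)
  qed
  show ?thesis using c1 c2 c3 c4 c5 c6 c7 c8 by blast
qed

lemma R4aux:
  assumes x: "x \<in> X" and y: "y \<in> X" and z: "z \<in> X"
    and lxz: "le x z" and lyz: "le y z" and d: "x \<noteq> y" "x \<noteq> z" "y \<noteq> z"
    and f1: "fw x z" and f2: "\<not> fw y z"
  shows False
proof -
  have m1: "th (EE x z) = inc_smult (cf x z) (EE (sig x) (sig z))" "cf x z \<noteq> 0" "le (sig x) (sig z)"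
    using th_mono[OF x z lxz] f1 by (auto simp: tgt_def fw_def)
  have m2: "th (EE y z) = inc_smult (cf y z) (EE (sig z) (sig y))" "cf y z \<noteq> 0" "le (sig z) (sig y)"
    using th_mono[OF y z lyz] f2 by (auto simp: tgt_def fw_def)
  have s: "sig x \<in> X" "sig y \<in> X" "sig z \<in> X" using x y z sig_in by auto
  have n: "sig x \<noteq> sig y" "sig x \<noteq> sig z" "sig y \<noteq> sig z" using sig_neq x y z d by auto
  define h where "h = (EE z z + EE x z + EE y z :: 'a \<Rightarrow> 'a \<Rightarrow> 'f)"
  have hA: "h \<in> incidence_alg X le" using x y z lxz lyz rfl by (simp add: h_def)
  have hi: "h \<star> h = h" using x y z lxz lyz d rfl by (simp add: h_def distL distR EE_EE)
  have th: "th h = esig z + inc_smult (cf x z) (EE (sig x) (sig z)) + inc_smult (cf y z) (EE (sig z) (sig y))"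
    using x y z lxz lyz rfl by (simp add: h_def th_add th_EE m1(1) m2(1))
  have "th h \<star> th h = th h" by (rule th_idem[OF hA hi])
  then have e: "(th h \<star> th h) (sig x) (sig y) = th h (sig x) (sig y)" by simp
  have "(th h \<star> th h) (sig x) (sig y) = cf x z * cf y z"
    unfolding th using s n m1(3) m2(3) rfl
    by (simp add: distL distR smL smR EE_EE smult_apply EE_apply)
  moreover have "th h (sig x) (sig y) = 0" unfolding th using n by (simp add: smult_apply EE_apply)
  ultimately show False using e m1(2) m2(2) by simp
qed

lemma R3: "x \<in> X \<Longrightarrow> y \<in> X \<Longrightarrow> z \<in> X \<Longrightarrow> le x y \<Longrightarrow> le x z \<Longrightarrow> x \<noteq> y \<Longrightarrow> x \<noteq> z \<Longrightarrow> fw x y = fw x z"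
  using R3aux[of x y z] R3aux[of x z y] by (cases "y = z") auto

lemma R4: "x \<in> X \<Longrightarrow> y \<in> X \<Longrightarrow> z \<in> X \<Longrightarrow> le x z \<Longrightarrow> le y z \<Longrightarrow> x \<noteq> z \<Longrightarrow> y \<noteq> z \<Longrightarrow> fw x z = fw y z"
  using R4aux[of x y z] R4aux[of y x z] by (cases "x = y") auto

lemma cf_refl: "x \<in> X \<Longrightarrow> cf x x = 1 \<and> fw x x"
proof -
  assume x: "x \<in> X"
  have f: "fw x x" using x by (simp add: fw_def rfl sig_in)
  have "th (EE x x) = esig x" using th_EE[OF x] .
  then show ?thesis using f by (simp add: cf_def EE_apply)
qed

definition ori where "ori a b = (if le a b then fw a b else fw b a)"

lemma share:
  assumes p: "p \<in> X" and v1: "v1 \<in> X" and v2: "v2 \<in> X" and d: "p \<noteq> v1" "p \<noteq> v2"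
    and c1: "le p v1 \<or> le v1 p" and c2: "le p v2 \<or> le v2 p"
  shows "ori p v1 = ori p v2"
proof -
  have n1: "le p v1 \<Longrightarrow> \<not> le v1 p" using asym p v1 d by blast
  have n2: "le p v2 \<Longrightarrow> \<not> le v2 p" using asym p v2 d by blast
  show ?thesis
  proof (cases "le p v1")
    case T1: True
    show ?thesis
    proof (cases "le p v2")
      case True
      then show ?thesis using T1 R3[OF p v1 v2 T1 True d] by (simp add: ori_def)
    next
      case False
      then have "le v2 p" using c2 by simp
      have "v1 \<noteq> v2" using asym p v2 \<open>le v2 p\<close> T1 d by blast
      then have "fw v2 p = fw p v1" using R2[OF v2 p v1 \<open>le v2 p\<close> T1] d by simp
      then show ?thesis using T1 False by (simp add: ori_def)
    qed
  next
    case F1: False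
    then have l1: "le v1 p" using c1 by simp
    show ?thesis
    proof (cases "le p v2")
      case True
      have "v1 \<noteq> v2" using asym p v1 l1 True d by blast
      then have "fw v1 p = fw p v2" using R2[OF v1 p v2 l1 True] d by simp
      then show ?thesis using F1 True by (simp add: ori_def)
    next
      case False
      then have "le v2 p" using c2 by simp
      then show ?thesis using F1 False l1 R4[OF v1 v2 p l1 _ _ _] d by (simp add: ori_def)
    qed
  qed
qed

end


context IA
begin

abbreviation EP where "EP p \<equiv> EE (fst p) (snd p)"

lemma EP_in: "p \<in> PP \<Longrightarrow> EP p \<in> incidence_alg X le"
  by (auto simp: PP_def)

lemma bilin: "(\<Sum>p\<in>S. inc_smult (a p) (M p)) \<star> (\<Sum>q\<in>S'. inc_smult (b q) (N q))
     = (\<Sum>p\<in>S. \<Sum>q\<in>S'. inc_smult (a p * b q) (M p \<star> N q))"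
  apply (subst sumL)
  apply (subst sumR)
  apply (simp add: smL smR sm_sm mult.commute)
  done

lemma lin_expand:
  assumes T: "inc_linear X le T" and f: "f \<in> incidence_alg X le"
  shows "T f = (\<Sum>p\<in>PP. inc_smult (f (fst p) (snd p)) (T (EP p)))"
proof -
  have "T f = T (\<Sum>p\<in>PP. inc_smult (f (fst p) (snd p)) (EP p))" using expand[OF f] by simp
  also have "\<dots> = (\<Sum>p\<in>PP. T (inc_smult (f (fst p) (snd p)) (EP p)))"
    by (rule lin_sum[OF finPP T]) (simp add: EP_in)
  also have "\<dots> = (\<Sum>p\<in>PP. inc_smult (f (fst p) (snd p)) (T (EP p)))"
    by (intro sum.cong refl) (simp add: lin_sm[OF T] EP_in)
  finally show ?thesis .
qed

lemma mult_expand: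
  assumes f: "f \<in> incidence_alg X le" and g: "g \<in> incidence_alg X le"
  shows "f \<star> g = (\<Sum>p\<in>PP. \<Sum>q\<in>PP. inc_smult (f (fst p) (snd p) * g (fst q) (snd q)) (EP p \<star> EP q))"
proof -
  have "f \<star> g = (\<Sum>p\<in>PP. inc_smult (f (fst p) (snd p)) (EP p)) \<star> (\<Sum>q\<in>PP. inc_smult (g (fst q) (snd q)) (EP q))"
    using expand[OF f] expand[OF g] by simp
  then show ?thesis by (simp only: bilin)
qed

lemma T_double:
  assumes T: "inc_linear X le T"
  shows "T (\<Sum>p\<in>PP. \<Sum>q\<in>PP. inc_smult (c p q) (EP p \<star> EP q)) = (\<Sum>p\<in>PP. \<Sum>q\<in>PP. inc_smult (c p q) (T (EP p \<star> EP q)))"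
proof -
  have "T (\<Sum>p\<in>PP. \<Sum>q\<in>PP. inc_smult (c p q) (EP p \<star> EP q)) = (\<Sum>p\<in>PP. T (\<Sum>q\<in>PP. inc_smult (c p q) (EP p \<star> EP q)))"
    by (rule lin_sum[OF finPP T]) (intro sum_in, simp)
  also have "\<dots> = (\<Sum>p\<in>PP. \<Sum>q\<in>PP. T (inc_smult (c p q) (EP p \<star> EP q)))"
    by (intro sum.cong refl lin_sum[OF finPP T]) simp
  also have "\<dots> = (\<Sum>p\<in>PP. \<Sum>q\<in>PP. inc_smult (c p q) (T (EP p \<star> EP q)))"
    by (intro sum.cong refl) (simp add: lin_sm[OF T])
  finally show ?thesis .
qed

lemma ext_hom:
  assumes T: "inc_linear X le T"
    and B: "\<And>p q. p \<in> PP \<Longrightarrow> q \<in> PP \<Longrightarrow> T (EP p \<star> EP q) = T (EP p) \<star> T (EP q)"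
    and f: "f \<in> incidence_alg X le" and g: "g \<in> incidence_alg X le"
  shows "T (f \<star> g) = T f \<star> T g"
proof -
  have "T (f \<star> g) = (\<Sum>p\<in>PP. \<Sum>q\<in>PP. inc_smult (f (fst p) (snd p) * g (fst q) (snd q)) (T (EP p \<star> EP q)))"
    unfolding mult_expand[OF f g] by (rule T_double[OF T])
  also have "\<dots> = (\<Sum>p\<in>PP. \<Sum>q\<in>PP. inc_smult (f (fst p) (snd p) * g (fst q) (snd q)) (T (EP p) \<star> T (EP q)))"
    by (intro sum.cong refl) (simp add: B)
  also have "\<dots> = T f \<star> T g"
    unfolding lin_expand[OF T f] lin_expand[OF T g] by (simp only: bilin)
  finally show ?thesis .
qed

lemma ext_anti:
  assumes T: "inc_linear X le T"
    and B: "\<And>p q. p \<in> PP \<Longrightarrow> q \<in> PP \<Longrightarrow> T (EP p \<star> EP q) = T (EP q) \<star> T (EP p)"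
    and f: "f \<in> incidence_alg X le" and g: "g \<in> incidence_alg X le"
  shows "T (f \<star> g) = T g \<star> T f"
proof -
  have "T (f \<star> g) = (\<Sum>p\<in>PP. \<Sum>q\<in>PP. inc_smult (f (fst p) (snd p) * g (fst q) (snd q)) (T (EP p \<star> EP q)))"
    unfolding mult_expand[OF f g] by (rule T_double[OF T])
  also have "\<dots> = (\<Sum>p\<in>PP. \<Sum>q\<in>PP. inc_smult (g (fst q) (snd q) * f (fst p) (snd p)) (T (EP q) \<star> T (EP p)))"
    by (intro sum.cong refl) (simp add: B mult.commute)
  also have "\<dots> = (\<Sum>q\<in>PP. \<Sum>p\<in>PP. inc_smult (g (fst q) (snd q) * f (fst p) (snd p)) (T (EP q) \<star> T (EP p)))"
    by (rule sum.swap)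
  also have "\<dots> = T g \<star> T f"
    unfolding lin_expand[OF T f] lin_expand[OF T g] by (simp only: bilin)
  finally show ?thesis .
qed

end


context Setup2
begin

lemma ori_sym: "a \<in> X \<Longrightarrow> b \<in> X \<Longrightarrow> a \<noteq> b \<Longrightarrow> le a b \<or> le b a \<Longrightarrow> ori a b = ori b a"
  using asym by (auto simp: ori_def)

lemma global_ori: "\<exists>ob. \<forall>a b. a \<in> X \<longrightarrow> b \<in> X \<longrightarrow> le a b \<longrightarrow> a \<noteq> b \<longrightarrow> fw a b = ob"
proof (cases "\<exists>a b. a \<in> X \<and> b \<in> X \<and> le a b \<and> a \<noteq> b")
  case False
  then show ?thesis by blast
next
  case True
  then obtain x0 y0 where p0: "x0 \<in> X" "y0 \<in> X" "le x0 y0" "x0 \<noteq> y0" by blast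
  define ob where "ob = fw x0 y0"
  define Q where "Q z = (\<forall>v\<in>X. z \<noteq> v \<and> (le z v \<or> le v z) \<longrightarrow> ori z v = ob)" for z
  have Q0: "Q x0"
    unfolding Q_def
  proof (intro ballI impI)
    fix v assume v: "v \<in> X" "x0 \<noteq> v \<and> (le x0 v \<or> le v x0)"
    have "ori x0 v = ori x0 y0" by (rule share) (use p0 v in auto)
    then show "ori x0 v = ob" using p0 by (simp add: ori_def ob_def)
  qed
  have QX: "Q z" if z: "z \<in> X" for z
  proof -
    have "(comparable_step X le)\<^sup>*\<^sup>* x0 z" using conn p0 z by (auto simp: connected_poset_def)
    then show ?thesis
    proof (induct rule: rtranclp_induct)
      case base then show ?case by (rule Q0)
    next
      case (step y z)
      have yz: "y \<in> X" "z \<in> X" "le y z \<or> le z y" using step(2) by (auto simp: comparable_step_def)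
      show ?case
      proof (cases "y = z")
        case True then show ?thesis using step(3) by simp
      next
        case False
        have oyz: "ori y z = ob" using step(3) yz False unfolding Q_def by blast
        show ?thesis unfolding Q_def
        proof (intro ballI impI)
          fix v assume v: "v \<in> X" "z \<noteq> v \<and> (le z v \<or> le v z)"
          have "ori z v = ori z y" by (rule share) (use yz v False in auto)
          also have "\<dots> = ori y z" using ori_sym yz False by auto
          finally show "ori z v = ob" using oyz by simp
        qed
      qed
    qed
  qed
  have "fw a b = ob" if "a \<in> X" "b \<in> X" "le a b" "a \<noteq> b" for a b
    using QX[OF that(1)] that unfolding Q_def ori_def by auto
  then show ?thesis by blast
qed

lemma cf_chain:
  assumes a: "a \<in> X" and b: "b \<in> X" and c: "c \<in> X" and ab: "le a b" and bc: "le b c"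
  shows "cf a c = cf a b * cf b c"
proof (cases "a = b")
  case True then show ?thesis using cf_refl[OF a] by simp
next
  case F1: False
  show ?thesis
  proof (cases "b = c")
    case True then show ?thesis using cf_refl[OF b] by simp
  next
    case False
    have "a \<noteq> c" using asym a b c ab bc F1 by (metis trns)
    then show ?thesis using R2[OF a b c ab bc F1] False by simp
  qed
qed

lemma mono_fw:
  assumes all: "\<forall>a b. a \<in> X \<longrightarrow> b \<in> X \<longrightarrow> le a b \<longrightarrow> a \<noteq> b \<longrightarrow> fw a b"
    and a: "a \<in> X" and b: "b \<in> X" and ab: "le a b"
  shows "th (EE a b) = inc_smult (cf a b) (EE (sig a) (sig b)) \<and> le (sig a) (sig b)"
proof -
  have f: "fw a b" using all a b ab cf_refl[OF a] by (cases "a = b") auto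
  then show ?thesis using th_mono[OF a b ab] by (simp add: tgt_def fw_def)
qed

lemma mono_bw:
  assumes all: "\<forall>a b. a \<in> X \<longrightarrow> b \<in> X \<longrightarrow> le a b \<longrightarrow> a \<noteq> b \<longrightarrow> \<not> fw a b"
    and a: "a \<in> X" and b: "b \<in> X" and ab: "le a b"
  shows "th (EE a b) = inc_smult (cf a b) (EE (sig b) (sig a)) \<and> le (sig b) (sig a)"
proof (cases "a = b")
  case True
  then show ?thesis using th_EE[OF a] cf_refl[OF a] a by (simp add: rfl sig_in)
next
  case False
  then have f: "\<not> fw a b" using all a b ab by blast
  then show ?thesis using th_mono[OF a b ab] by (simp add: tgt_def)
qed

lemma hom_case:
  assumes all: "\<forall>a b. a \<in> X \<longrightarrow> b \<in> X \<longrightarrow> le a b \<longrightarrow> a \<noteq> b \<longrightarrow> fw a b"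
    and p: "p \<in> PP" and q: "q \<in> PP"
  shows "th (EP p \<star> EP q) = th (EP p) \<star> th (EP q)"
proof -
  obtain a b where pab: "p = (a, b)" "a \<in> X" "b \<in> X" "le a b" using p by (cases p) (auto simp: PP_def)
  obtain c d where qcd: "q = (c, d)" "c \<in> X" "d \<in> X" "le c d" using q by (cases q) (auto simp: PP_def)
  note m1 = mono_fw[OF all pab(2-4)] and m2 = mono_fw[OF all qcd(2-4)]
  have s: "sig a \<in> X" "sig b \<in> X" "sig c \<in> X" "sig d \<in> X" using pab qcd sig_in by auto
  have R: "th (EP p) \<star> th (EP q) = inc_smult (cf a b * cf c d) (if sig b = sig c then EE (sig a) (sig d) else 0)"
    using m1 m2 s pab qcd by (simp add: smL smR sm_sm EE_EE mult.commute)
  show ?thesis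
  proof (cases "b = c")
    case True
    have ad: "le a d" using trns pab qcd True by blast
    have "th (EP p \<star> EP q) = th (EE a d)" using pab qcd True by (simp add: EE_EE)
    also have "\<dots> = inc_smult (cf a d) (EE (sig a) (sig d))" using mono_fw[OF all pab(2) qcd(3) ad] by simp
    also have "\<dots> = th (EP p) \<star> th (EP q)" using R True cf_chain[OF pab(2) pab(3) qcd(3) pab(4)] qcd(4) by simp
    finally show ?thesis .
  next
    case False
    then have "sig b \<noteq> sig c" using sig_neq pab qcd by blast
    then show ?thesis using R False pab qcd by (simp add: EE_EE lin_zero[OF th_lin])
  qed
qed

lemma anti_case:
  assumes all: "\<forall>a b. a \<in> X \<longrightarrow> b \<in> X \<longrightarrow> le a b \<longrightarrow> a \<noteq> b \<longrightarrow> \<not> fw a b"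
    and p: "p \<in> PP" and q: "q \<in> PP"
  shows "th (EP p \<star> EP q) = th (EP q) \<star> th (EP p)"
proof -
  obtain a b where pab: "p = (a, b)" "a \<in> X" "b \<in> X" "le a b" using p by (cases p) (auto simp: PP_def)
  obtain c d where qcd: "q = (c, d)" "c \<in> X" "d \<in> X" "le c d" using q by (cases q) (auto simp: PP_def)
  note m1 = mono_bw[OF all pab(2-4)] and m2 = mono_bw[OF all qcd(2-4)]
  have s: "sig a \<in> X" "sig b \<in> X" "sig c \<in> X" "sig d \<in> X" using pab qcd sig_in by auto
  have R: "th (EP q) \<star> th (EP p) = inc_smult (cf c d * cf a b) (if sig c = sig b then EE (sig d) (sig a) else 0)"
    using m1 m2 s pab qcd by (simp add: smL smR sm_sm EE_EE mult.commute)
  show ?thesis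
  proof (cases "b = c")
    case True
    have ad: "le a d" using trns pab qcd True by blast
    have "th (EP p \<star> EP q) = th (EE a d)" using pab qcd True by (simp add: EE_EE)
    also have "\<dots> = inc_smult (cf a d) (EE (sig d) (sig a))" using mono_bw[OF all pab(2) qcd(3) ad] by simp
    also have "\<dots> = th (EP q) \<star> th (EP p)" using R True cf_chain[OF pab(2) pab(3) qcd(3) pab(4)] qcd(4) by (simp add: mult.commute)
    finally show ?thesis .
  next
    case False
    then have "sig c \<noteq> sig b" using sig_neq pab qcd by metis
    then show ?thesis using R False pab qcd by (simp add: EE_EE lin_zero[OF th_lin])
  qed
qed

lemma psi_mult_from:
  assumes f: "f \<in> incidence_alg X le" and g: "g \<in> incidence_alg X le"
  shows "psi f \<star> psi g = VV \<star> ((th f \<star> th g) \<star> UU)"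
proof -
  have "psi f \<star> psi g = VV \<star> (th f \<star> ((UU \<star> VV) \<star> (th g \<star> UU)))"
    using psi_th[OF f] psi_th[OF g] by (simp add: assoc)
  also have "\<dots> = VV \<star> ((th f \<star> th g) \<star> UU)" by (simp add: UV oneL assoc)
  finally show ?thesis .
qed

lemma final: "inc_automorphism X le psi \<or> inc_anti_automorphism X le psi"
proof -
  obtain ob where ob: "\<forall>a b. a \<in> X \<longrightarrow> b \<in> X \<longrightarrow> le a b \<longrightarrow> a \<noteq> b \<longrightarrow> fw a b = ob" using global_ori by blast
  show ?thesis
  proof (cases ob)
    case True
    then have all: "\<forall>a b. a \<in> X \<longrightarrow> b \<in> X \<longrightarrow> le a b \<longrightarrow> a \<noteq> b \<longrightarrow> fw a b" using ob by blast
    have "psi (f \<star> g) = psi f \<star> psi g" if "f \<in> incidence_alg X le" "g \<in> incidence_alg X le" for f g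
    proof -
      have "th (f \<star> g) = th f \<star> th g" by (rule ext_hom[OF th_lin _ that]) (rule hom_case[OF all])
      then show ?thesis using psi_th[of "f \<star> g"] psi_mult_from[OF that] by simp
    qed
    then have "inc_automorphism X le psi" unfolding inc_automorphism_def
      using psi_bij psi_lin psi_one by blast
    then show ?thesis by blast
  next
    case False
    then have all: "\<forall>a b. a \<in> X \<longrightarrow> b \<in> X \<longrightarrow> le a b \<longrightarrow> a \<noteq> b \<longrightarrow> \<not> fw a b" using ob by blast
    have "psi (f \<star> g) = psi g \<star> psi f" if "f \<in> incidence_alg X le" "g \<in> incidence_alg X le" for f g
    proof -
      have "th (f \<star> g) = th g \<star> th f" by (rule ext_anti[OF th_lin _ that]) (rule anti_case[OF all])
      then show ?thesis using psi_th[of "f \<star> g"] psi_mult_from[of g f] that by simp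
    qed
    then have "inc_anti_automorphism X le psi" unfolding inc_anti_automorphism_def
      using psi_bij psi_lin psi_one by blast
    then show ?thesis by blast
  qed
qed

end

theorem theorem7p6:
  fixes X :: "'a set" and le :: "'a \<Rightarrow> 'a \<Rightarrow> bool" and k :: nat
    and \<phi> :: "('a \<Rightarrow> 'a \<Rightarrow> 'f::field) \<Rightarrow> ('a \<Rightarrow> 'a \<Rightarrow> 'f)"
  assumes "k \<ge> 3"
    and "finite X" and "poset_on X le" and "connected_poset X le"
    and "\<exists>w::'f. primitive_root_of_unity (k - 1) w"
    and "of_nat k \<noteq> (0::'f)"
    and "inc_linear X le \<phi>"
    and "bij_betw \<phi> (incidence_alg X le) (incidence_alg X le)"
    and "\<phi> ` k_potents k X le \<subseteq> k_potents k X le"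
  shows "\<exists>r::'f. r ^ (k - 1) = 1 \<and>
           (\<exists>\<psi>. (inc_automorphism X le \<psi> \<or> inc_anti_automorphism X le \<psi>) \<and>
                 (\<forall>f\<in>incidence_alg X le. \<phi> f = inc_smult r (\<psi> f)))"
proof -
  obtain w :: 'f where w: "primitive_root_of_unity (k - 1) w" using assms(5) by blast
  have km: "k = Suc (k - 1)" "k - 1 \<ge> 2" using assms(1) by auto
  interpret S: Setup X le k "k - 1" w \<phi>
    by (unfold_locales) (use assms w km in auto)
  obtain r where r: "r ^ (k - 1) = 1" "r \<noteq> 0" "\<phi> (inc_one X) = inc_smult r (inc_one X)"
    using S.phi_one by blast
  interpret S2: Setup2 X le k "k - 1" w \<phi> r
    by (unfold_locales) (use r in auto)
  show ?thesis
  proof (intro exI conjI)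
    show "r ^ (k - 1) = 1" by (rule r(1))
    show "inc_automorphism X le S2.psi \<or> inc_anti_automorphism X le S2.psi" by (rule S2.final)
    show "\<forall>f\<in>incidence_alg X le. \<phi> f = inc_smult r (S2.psi f)" using S2.phi_psi by blast
  qed
qed

end
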